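(* For every integer $n\ge1$: $$\hat d_{1,1}\,P_n(x;q^{\frac12}x_0,q^{\frac12}x_1)=q^{-n-\frac12}(1-q^n)^2P_{n-1}(x;x_0,x_1),$$ $$\hat d_{1,-1}\,P_n(x;q^{\frac12}x_0,q^{-\frac12}x_1)=q^{-n-\frac32}(x_1^2-q^{n+1})^2P_n(x;x_0,x_1),$$ $$\hat d_{-1,1}\,P_n(x;q^{-\frac12}x_0,q^{\frac12}x_1)=q^{-n-\frac32}(x_0^2-q^{n+1})^2P_n(x;x_0,x_1),$$ $$\hat d_{-1,-1}\,P_n(x;q^{-\frac12}x_0,q^{-\frac12}x_1)=q^{-n-\frac52}(x_0^2x_1^2-q^{n+2})^2P_{n+1}(x;x_0,x_1),$$ where the operators $\hat d_{a,b}$ act only in the variable $x$.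
   Context: Let $q$ be a complex parameter with $0<|q|<1$, with a fixed choice of $q^{1/4}$ and $q^{k/4}:=(q^{1/4})^k$; $x,x_0,x_1$ are variables. Notation: $(y)_n=(y;q)_n=\prod_{i=1}^{n}(1-yq^{i-1})$, $(y_1,\dots,y_k)_n=(y_1)_n\cdots(y_k)_n$. For $n\ge0$, $$P_n(x;x_0,x_1)=(-1)^nq^{-\frac n2}\frac{\left(q,\frac{q}{x_0^2},\frac{q}{x_1^2}\right)_n}{\left(\frac{q^{n+1}}{x_0^2x_1^2}\right)_n}\sum_{k=0}^{n}q^k\frac{\left(q^{-n},\frac{q^{n+1}}{x_0^2x_1^2}\right)_k}{\left(q,q,\frac{q}{x_0^2},\frac{q}{x_1^2}\right)_k}\left(-q^{\frac12}x,-q^{\frac12}x^{-1}\right)_k$$ (the Askey–Wilson polynomial with parameters $(a,b,c,d)=(-q^{1/2},-q^{1/2},-q^{1/2}/x_0^2,-q^{1/2}/x_1^2)$). $\eth$ acts by $\eth f(x)=f(q^{1/2}x)$ (with $x_0,x_1$ unchanged); a function written to the left of an operator acts by multiplication after the operator is applied. Let $\omega(x)=\frac{x(1+q^{1/2}x)}{q^{1/2}(1-x^2)(1-q^{1/2}x)}$, $b(x_b,x)=\frac{(q^{1/2}x+x_b^2)(q^{3/2}x+x_b^2)}{q\,x}$, $c(x_b,x)=\frac{(q^{1/2}x+x_b^2)(q^{1/2}+x\,x_b^2)}{q^{1/2}x}$ for $b\in\{0,1\}$, and $$\hat d_{1,1}=\sum_{\epsilon=\pm1}\omega(x^\epsilon)(\eth^{2\epsilon}-1),\quad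 \hat d_{1,-1}=\sum_{\epsilon=\pm1}\omega(x^\epsilon)\big(b(x_1,x^\epsilon)\eth^{2\epsilon}-c(x_1,x)\big),\quad \hat d_{-1,1}=\sum_{\epsilon=\pm1}\omega(x^\epsilon)\big(b(x_0,x^\epsilon)\eth^{2\epsilon}-c(x_0,x)\big),$$ $$\hat d_{-1,-1}=\sum_{\epsilon=\pm1}\omega(x^\epsilon)\big(b(x_0,x^\epsilon)b(x_1,x^\epsilon)\eth^{2\epsilon}-c(x_0,x)c(x_1,x)\big).$$ *)

theory Defs
  imports Complex_Main
begin

text \<open>Throughout, r denotes the fixed choice of q^(1/4), so q = r^4, q^(1/2) = r^2,
  q^(k/4) = r^k.\<close>

definition qpoch :: "complex \<Rightarrow> complex \<Rightarrow> nat \<Rightarrow> complex" where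
  "qpoch q y n = (\<Prod>i<n. (1 - y * q ^ i))"

definition AWP :: "complex \<Rightarrow> nat \<Rightarrow> complex \<Rightarrow> complex \<Rightarrow> complex \<Rightarrow> complex" where
  "AWP r n x x0 x1 =
     (let q = r ^ 4 in
      (-1) ^ n * inverse (r ^ (2 * n)) *
      (qpoch q q n * qpoch q (q / x0\<^sup>2) n * qpoch q (q / x1\<^sup>2) n)
        / qpoch q (q ^ (n + 1) / (x0\<^sup>2 * x1\<^sup>2)) n *
      (\<Sum>k = 0..n. q ^ k *
         (qpoch q (inverse (q ^ n)) k * qpoch q (q ^ (n + 1) / (x0\<^sup>2 * x1\<^sup>2)) k)
         / (qpoch q q k * qpoch q q k * qpoch q (q / x0\<^sup>2) k * qpoch q (q / x1\<^sup>2) k)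
         * (qpoch q (- (r ^ 2) * x) k * qpoch q (- (r ^ 2) * inverse x) k)))"

definition omega :: "complex \<Rightarrow> complex \<Rightarrow> complex" where
  "omega r x = x * (1 + r ^ 2 * x) / (r ^ 2 * (1 - x\<^sup>2) * (1 - r ^ 2 * x))"

definition bcoef :: "complex \<Rightarrow> complex \<Rightarrow> complex \<Rightarrow> complex" where
  "bcoef r xb x = (r ^ 2 * x + xb\<^sup>2) * (r ^ 6 * x + xb\<^sup>2) / (r ^ 4 * x)"

definition ccoef :: "complex \<Rightarrow> complex \<Rightarrow> complex \<Rightarrow> complex" where
  "ccoef r xb x = (r ^ 2 * x + xb\<^sup>2) * (r ^ 2 + x * xb\<^sup>2) / (r ^ 2 * x)"

text \<open>The operators, acting on a function f of x; eth^(2 eps) f (x) = f (q^eps x).\<close>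
definition d_pp :: "complex \<Rightarrow> (complex \<Rightarrow> complex) \<Rightarrow> complex \<Rightarrow> complex" where
  "d_pp r f x = omega r x * (f (r ^ 4 * x) - f x)
              + omega r (inverse x) * (f (x / r ^ 4) - f x)"

definition d_pm :: "complex \<Rightarrow> complex \<Rightarrow> (complex \<Rightarrow> complex) \<Rightarrow> complex \<Rightarrow> complex" where
  "d_pm r x1 f x = omega r x * (bcoef r x1 x * f (r ^ 4 * x) - ccoef r x1 x * f x)
              + omega r (inverse x) * (bcoef r x1 (inverse x) * f (x / r ^ 4) - ccoef r x1 x * f x)"

definition d_mp :: "complex \<Rightarrow> complex \<Rightarrow> (complex \<Rightarrow> complex) \<Rightarrow> complex \<Rightarrow> complex" where
  "d_mp r x0 f x = omega r x * (bcoef r x0 x * f (r ^ 4 * x) - ccoef r x0 x * f x)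
              + omega r (inverse x) * (bcoef r x0 (inverse x) * f (x / r ^ 4) - ccoef r x0 x * f x)"

definition d_mm :: "complex \<Rightarrow> complex \<Rightarrow> complex \<Rightarrow> (complex \<Rightarrow> complex) \<Rightarrow> complex \<Rightarrow> complex" where
  "d_mm r x0 x1 f x =
     omega r x * (bcoef r x0 x * bcoef r x1 x * f (r ^ 4 * x)
                  - ccoef r x0 x * ccoef r x1 x * f x)
   + omega r (inverse x) * (bcoef r x0 (inverse x) * bcoef r x1 (inverse x) * f (x / r ^ 4)
                  - ccoef r x0 x * ccoef r x1 x * f x)"

text \<open>Genericity of parameters: all denominators in the defining formula of
  P m (x; y0, y1) are nonzero (the formula is a rational function; the identities are
  identities of rational functions, checked at generic points).\<close>
definition AW_generic :: "complex \<Rightarrow> nat \<Rightarrow> complex \<Rightarrow> complex \<Rightarrow> bool" where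
  "AW_generic r m y0 y1 \<longleftrightarrow>
     (let q = r ^ 4 in
      y0 \<noteq> 0 \<and> y1 \<noteq> 0 \<and> qpoch q (q / y0\<^sup>2) m \<noteq> 0 \<and> qpoch q (q / y1\<^sup>2) m \<noteq> 0 \<and>
      qpoch q (q ^ (m + 1) / (y0\<^sup>2 * y1\<^sup>2)) m \<noteq> 0)"

end

theory Submission
  imports Defs
begin

lemma qp_Suc: "qpoch q a (Suc k) = qpoch q a k * (1 - a * q ^ k)"
  by (simp add: qpoch_def)

lemma qp_Suc': "qpoch q a (Suc k) = (1 - a) * qpoch q (a * q) k"
  unfolding qpoch_def by (subst prod.lessThan_Suc_shift) (simp add: mult.assoc)

lemma qp_0[simp]: "qpoch q a 0 = 1" by (simp add: qpoch_def)

definition phi :: "complex \<Rightarrow> nat \<Rightarrow> complex \<Rightarrow> complex" where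
  "phi r k x = qpoch (r^4) (-(r^2)*x) k * qpoch (r^4) (-(r^2)*inverse x) k"

lemma phi_shift:
  assumes r: "r \<noteq> 0" and x: "x \<noteq> 0"
  shows "phi r (Suc m) x = qpoch (r^4) (-(r^2)*x) m * qpoch (r^4) (-(r^2)*inverse x) m
            * ((1 + r^2*x*(r^4)^m) * (1 + r^2*inverse x*(r^4)^m))"
    and "(1 + r^2*x) * phi r (Suc m) (r^4*x) = qpoch (r^4) (-(r^2)*x) m * qpoch (r^4) (-(r^2)*inverse x) m
            * ((1 + r^2*x*(r^4)^m) * (1 + r^2*x*(r^4)^m*r^4) * (1 + r^2*inverse x/r^4))"
    and "(1 + r^2*inverse x) * phi r (Suc m) (x/r^4) = qpoch (r^4) (-(r^2)*x) m * qpoch (r^4) (-(r^2)*inverse x) m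
            * ((1 + r^2*inverse x*(r^4)^m) * (1 + r^2*inverse x*(r^4)^m*r^4) * (1 + r^2*x/r^4))"
proof -
  show "phi r (Suc m) x = qpoch (r^4) (-(r^2)*x) m * qpoch (r^4) (-(r^2)*inverse x) m
            * ((1 + r^2*x*(r^4)^m) * (1 + r^2*inverse x*(r^4)^m))"
    unfolding phi_def qp_Suc by (simp add: algebra_simps)
  have a1: "qpoch (r^4) (-(r^2)*x) (Suc (Suc m)) = (1 + r^2*x) * qpoch (r^4) (-(r^2)*(r^4*x)) (Suc m)"
    by (subst qp_Suc') (simp add: algebra_simps)
  have a2: "qpoch (r^4) (-(r^2)*inverse (r^4*x)) (Suc m) = (1 + r^2*inverse x/r^4) * qpoch (r^4) (-(r^2)*inverse x) m"
  proof -
    have e: "-(r^2)*inverse (r^4*x) * r^4 = -(r^2)*inverse x" using r x by (simp add: field_simps eval_nat_numeral)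
    show ?thesis unfolding qp_Suc'[where a="-(r^2)*inverse (r^4*x)"] e by (simp add: field_simps)
  qed
  have b1: "qpoch (r^4) (-(r^2)*inverse x) (Suc (Suc m)) = (1 + r^2*inverse x) * qpoch (r^4) (-(r^2)*inverse(x/r^4)) (Suc m)"
  proof -
    have e: "-(r^2)*inverse x * r^4 = -(r^2)*inverse(x/r^4)" using r x by (simp add: field_simps eval_nat_numeral)
    show ?thesis unfolding qp_Suc'[where a="-(r^2)*inverse x" and k="Suc m"] e by simp
  qed
  have b2: "qpoch (r^4) (-(r^2)*(x/r^4)) (Suc m) = (1 + r^2*x/r^4) * qpoch (r^4) (-(r^2)*x) m"
  proof -
    have e: "-(r^2)*(x/r^4) * r^4 = -(r^2)*x" using r x by (simp add: field_simps eval_nat_numeral)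
    show ?thesis unfolding qp_Suc'[where a="-(r^2)*(x/r^4)"] e by simp
  qed
  show "(1 + r^2*x) * phi r (Suc m) (r^4*x) = qpoch (r^4) (-(r^2)*x) m * qpoch (r^4) (-(r^2)*inverse x) m
            * ((1 + r^2*x*(r^4)^m) * (1 + r^2*x*(r^4)^m*r^4) * (1 + r^2*inverse x/r^4))"
  proof -
    have h: "(1 + r^2*x) * phi r (Suc m) (r^4*x) = qpoch (r^4) (-(r^2)*x) (Suc (Suc m)) * qpoch (r^4) (-(r^2)*inverse (r^4*x)) (Suc m)"
      unfolding phi_def a1 by simp
    show ?thesis unfolding h a2 unfolding qp_Suc by (simp add: algebra_simps)
  qed
  show "(1 + r^2*inverse x) * phi r (Suc m) (x/r^4) = qpoch (r^4) (-(r^2)*x) m * qpoch (r^4) (-(r^2)*inverse x) m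
            * ((1 + r^2*inverse x*(r^4)^m) * (1 + r^2*inverse x*(r^4)^m*r^4) * (1 + r^2*x/r^4))"
  proof -
    have h: "(1 + r^2*inverse x) * phi r (Suc m) (x/r^4) = qpoch (r^4) (-(r^2)*inverse x) (Suc (Suc m)) * qpoch (r^4) (-(r^2)*(x/r^4)) (Suc m)"
      unfolding phi_def b1 by simp
    show ?thesis unfolding h b2 unfolding qp_Suc by (simp add: algebra_simps)
  qed
qed

lemma key_pp:
  fixes r x t A B :: complex
  assumes r: "r \<noteq> 0" and x: "x \<noteq> 0" "x^2 \<noteq> 1" "r^2*x \<noteq> 1" "r^2 \<noteq> x"
  shows "x/(r^2*(1-x^2)*(1-r^2*x)) * (A*B*((1 + r^2*x*t) * (1 + r^2*x*t*r^4) * (1 + r^2*inverse x/r^4)))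
       - x/(r^2*(1-x^2)*(1-r^2*x)) * (1+r^2*x) * (A*B*((1 + r^2*x*t) * (1 + r^2*inverse x*t)))
       + x^2/(r^2*(x^2-1)*(x-r^2)) * (A*B*((1 + r^2*inverse x*t) * (1 + r^2*inverse x*t*r^4) * (1 + r^2*x/r^4)))
       - x^2/(r^2*(x^2-1)*(x-r^2)) * (1+r^2*inverse x) * (A*B*((1 + r^2*x*t) * (1 + r^2*inverse x*t)))
     = (1 - r^4*t)^2/r^4 * (A*B)"
proof -
  have x1: "1 - x^2 \<noteq> 0" "1 - r^2*x \<noteq> 0" "x - r^2 \<noteq> 0" "x^2 - 1 \<noteq> 0" using x
    by (auto simp: field_simps)
  show ?thesis using r x x1 by (simp add: divide_simps) algebra
qed

lemma omega_x: "omega r x = x/(r^2*(1-x^2)*(1-r^2*x)) * (1+r^2*x)"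
  by (simp add: omega_def)

lemma omega_ix: assumes "x \<noteq> 0" "x^2 \<noteq> 1" "r^2 \<noteq> x"
  shows "omega r (inverse x) = x^2/(r^2*(x^2-1)*(x-r^2)) * (1+r^2*inverse x)"
proof -
  have x1: "x - r^2 \<noteq> 0" "x^2 - 1 \<noteq> 0" using assms by (auto simp: field_simps)
  show ?thesis unfolding omega_def using assms x1 by (simp add: divide_simps)
qed

lemma dpp_phi_Suc:
  assumes r: "r \<noteq> 0" and x: "x \<noteq> 0" "x^2 \<noteq> 1" "r^2*x \<noteq> 1" "r^2 \<noteq> x"
  shows "d_pp r (phi r (Suc m)) x = (1 - (r^4)^(Suc m))^2/r^4 * phi r m x"
proof -
  define W1 where "W1 = x/(r^2*(1-x^2)*(1-r^2*x))"
  define W2 where "W2 = x^2/(r^2*(x^2-1)*(x-r^2))"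
  have o1: "omega r x = W1 * (1+r^2*x)" unfolding W1_def by (rule omega_x)
  have o2: "omega r (inverse x) = W2 * (1+r^2*inverse x)" unfolding W2_def by (rule omega_ix[OF x(1,2,4)])
  have "d_pp r (phi r (Suc m)) x =
      W1 * ((1+r^2*x) * phi r (Suc m) (r^4*x))
    - W1 * (1+r^2*x) * phi r (Suc m) x
    + W2 * ((1+r^2*inverse x) * phi r (Suc m) (x/r^4))
    - W2 * (1+r^2*inverse x) * phi r (Suc m) x"
    unfolding d_pp_def o1 o2 by (simp add: algebra_simps)
  also have "\<dots> = (1 - r^4*(r^4)^m)^2/r^4 * (qpoch (r^4) (-(r^2)*x) m * qpoch (r^4) (-(r^2)*inverse x) m)"
    unfolding phi_shift[OF r x(1)] W1_def W2_def by (rule key_pp[OF r x])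
  finally show ?thesis by (simp add: phi_def)
qed

lemma dpp_phi_0: "d_pp r (phi r 0) x = 0"
  by (simp add: d_pp_def phi_def)

definition alpha_pm :: "complex \<Rightarrow> complex \<Rightarrow> complex \<Rightarrow> complex" where
  "alpha_pm r X Q = (X - r^4*Q)^2/(Q*r^6)"
definition beta_pm :: "complex \<Rightarrow> complex \<Rightarrow> complex \<Rightarrow> complex" where
  "beta_pm r X Q = -((1-Q)^2*(X-Q)*(X-r^4*Q))/(Q*r^6)"

lemma key_pm:
  fixes r x t x1 :: complex
  assumes r: "r \<noteq> 0" and t: "t \<noteq> 0" and x: "x \<noteq> 0" "x^2 \<noteq> 1" "r^2*x \<noteq> 1" "r^2 \<noteq> x"
  shows "x/(r^2*(1-x^2)*(1-r^2*x)) * bcoef r x1 x * ((1 + r^2*x*t) * (1 + r^2*x*t*r^4) * (1 + r^2*inverse x/r^4))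
       - x/(r^2*(1-x^2)*(1-r^2*x)) * (1+r^2*x) * ccoef r x1 x * ((1 + r^2*x*t) * (1 + r^2*inverse x*t))
       + x^2/(r^2*(x^2-1)*(x-r^2)) * bcoef r x1 (inverse x) * ((1 + r^2*inverse x*t) * (1 + r^2*inverse x*t*r^4) * (1 + r^2*x/r^4))
       - x^2/(r^2*(x^2-1)*(x-r^2)) * (1+r^2*inverse x) * ccoef r x1 x * ((1 + r^2*x*t) * (1 + r^2*inverse x*t))
     = alpha_pm r (x1^2) (r^4*t) * ((1 + r^2*x*t) * (1 + r^2*inverse x*t)) + beta_pm r (x1^2) (r^4*t)"
proof -
  have x1: "1 - x^2 \<noteq> 0" "1 - r^2*x \<noteq> 0" "x - r^2 \<noteq> 0" "x^2 - 1 \<noteq> 0" using x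
    by (auto simp: field_simps)
  show ?thesis unfolding alpha_pm_def beta_pm_def bcoef_def ccoef_def
    using r t x x1 by (simp add: divide_simps) algebra
qed

lemma key_pm0:
  fixes r x x1 :: complex
  assumes r: "r \<noteq> 0" and x: "x \<noteq> 0" "x^2 \<noteq> 1" "r^2*x \<noteq> 1" "r^2 \<noteq> x"
  shows "x/(r^2*(1-x^2)*(1-r^2*x)) * (1+r^2*x) * bcoef r x1 x
       - x/(r^2*(1-x^2)*(1-r^2*x)) * (1+r^2*x) * ccoef r x1 x
       + x^2/(r^2*(x^2-1)*(x-r^2)) * (1+r^2*inverse x) * bcoef r x1 (inverse x)
       - x^2/(r^2*(x^2-1)*(x-r^2)) * (1+r^2*inverse x) * ccoef r x1 x
     = alpha_pm r (x1^2) 1"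
proof -
  have x1: "1 - x^2 \<noteq> 0" "1 - r^2*x \<noteq> 0" "x - r^2 \<noteq> 0" "x^2 - 1 \<noteq> 0" using x
    by (auto simp: field_simps)
  show ?thesis unfolding alpha_pm_def bcoef_def ccoef_def
    using r x x1 by (simp add: divide_simps) algebra
qed

definition gamma_mm :: "complex \<Rightarrow> complex \<Rightarrow> complex \<Rightarrow> complex \<Rightarrow> complex" where
  "gamma_mm r X0 X1 Q = (X0*X1 - r^8*Q)^2/(r^12*Q^2)"
definition beta_mm :: "complex \<Rightarrow> complex \<Rightarrow> complex \<Rightarrow> complex \<Rightarrow> complex" where
  "beta_mm r X0 X1 Q = (1-Q)^2*(X0-Q)*(X0-r^4*Q)*(X1-Q)*(X1-r^4*Q)/(r^8*Q^2)"
definition alpha_mm :: "complex \<Rightarrow> complex \<Rightarrow> complex \<Rightarrow> complex \<Rightarrow> complex" where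
  "alpha_mm r X0 X1 Q = (let q = r^4 in
     (2*q*Q^3 - (q+q^2)*Q^4 + (-2*Q^2+(1+q)*Q^3)*(X0+X1) + (2*Q/q - 2*(1+q)*Q^2/q + 2*Q^3)*X0*X1
      + ((1+q)*Q/q^2 - 2*Q^2/q)*X0*X1*(X0+X1) + (-(1+q)/q^3 + 2*Q/q^2)*X0^2*X1^2)/Q^2)"

lemma key_mm0:
  fixes r x x0 x1 :: complex
  assumes r: "r \<noteq> 0" and x: "x \<noteq> 0" "x^2 \<noteq> 1" "r^2*x \<noteq> 1" "r^2 \<noteq> x"
  shows "x/(r^2*(1-x^2)*(1-r^2*x)) * (1+r^2*x) * (bcoef r x0 x * bcoef r x1 x)
       - x/(r^2*(1-x^2)*(1-r^2*x)) * (1+r^2*x) * (ccoef r x0 x * ccoef r x1 x)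
       + x^2/(r^2*(x^2-1)*(x-r^2)) * (1+r^2*inverse x) * (bcoef r x0 (inverse x) * bcoef r x1 (inverse x))
       - x^2/(r^2*(x^2-1)*(x-r^2)) * (1+r^2*inverse x) * (ccoef r x0 x * ccoef r x1 x)
     = gamma_mm r (x0^2) (x1^2) 1 * ((1 + r^2*x) * (1 + r^2*inverse x)) + alpha_mm r (x0^2) (x1^2) 1"
proof -
  have x1: "1 - x^2 \<noteq> 0" "1 - r^2*x \<noteq> 0" "x - r^2 \<noteq> 0" "x^2 - 1 \<noteq> 0" using x
    by (auto simp: field_simps)
  show ?thesis unfolding alpha_mm_def gamma_mm_def bcoef_def ccoef_def Let_def
    using r x x1 by (simp add: divide_simps) algebra
qed

lemma key_mm:
  fixes r x t x0 x1 :: complex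
  assumes r: "r \<noteq> 0" and t: "t \<noteq> 0" and x: "x \<noteq> 0" "x^2 \<noteq> 1" "r^2*x \<noteq> 1" "r^2 \<noteq> x"
  shows "x/(r^2*(1-x^2)*(1-r^2*x)) * (bcoef r x0 x * bcoef r x1 x) * ((1 + r^2*x*t) * (1 + r^2*x*t*r^4) * (1 + r^2*inverse x/r^4))
       - x/(r^2*(1-x^2)*(1-r^2*x)) * (1+r^2*x) * (ccoef r x0 x * ccoef r x1 x) * ((1 + r^2*x*t) * (1 + r^2*inverse x*t))
       + x^2/(r^2*(x^2-1)*(x-r^2)) * (bcoef r x0 (inverse x) * bcoef r x1 (inverse x)) * ((1 + r^2*inverse x*t) * (1 + r^2*inverse x*t*r^4) * (1 + r^2*x/r^4))
       - x^2/(r^2*(x^2-1)*(x-r^2)) * (1+r^2*inverse x) * (ccoef r x0 x * ccoef r x1 x) * ((1 + r^2*x*t) * (1 + r^2*inverse x*t))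
     = gamma_mm r (x0^2) (x1^2) (r^4*t) * (((1 + r^2*x*t) * (1 + r^2*inverse x*t)) * ((1 + r^2*x*(r^4*t)) * (1 + r^2*inverse x*(r^4*t))))
       + alpha_mm r (x0^2) (x1^2) (r^4*t) * ((1 + r^2*x*t) * (1 + r^2*inverse x*t)) + beta_mm r (x0^2) (x1^2) (r^4*t)"
proof -
  have x1: "1 - x^2 \<noteq> 0" "1 - r^2*x \<noteq> 0" "x - r^2 \<noteq> 0" "x^2 - 1 \<noteq> 0" using x
    by (auto simp: field_simps)
  show ?thesis unfolding alpha_mm_def beta_mm_def gamma_mm_def bcoef_def ccoef_def Let_def
    using r t x x1 by (simp add: divide_simps) algebra
qed

lemma phi_Suc2:
  "phi r (Suc (Suc m)) x = qpoch (r^4) (-(r^2)*x) m * qpoch (r^4) (-(r^2)*inverse x) m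
     * (((1 + r^2*x*(r^4)^m) * (1 + r^2*inverse x*(r^4)^m)) * ((1 + r^2*x*(r^4*(r^4)^m)) * (1 + r^2*inverse x*(r^4*(r^4)^m))))"
  unfolding phi_def qp_Suc by (simp add: algebra_simps)

lemma phi_Suc1:
  "phi r (Suc m) x = qpoch (r^4) (-(r^2)*x) m * qpoch (r^4) (-(r^2)*inverse x) m
     * ((1 + r^2*x*(r^4)^m) * (1 + r^2*inverse x*(r^4)^m))"
  unfolding phi_def qp_Suc by (simp add: algebra_simps)

lemma dpm_phi_Suc:
  assumes r: "r \<noteq> 0" and x: "x \<noteq> 0" "x^2 \<noteq> 1" "r^2*x \<noteq> 1" "r^2 \<noteq> x"
  shows "d_pm r x1 (phi r (Suc m)) x = alpha_pm r (x1^2) ((r^4)^(Suc m)) * phi r (Suc m) x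
            + beta_pm r (x1^2) ((r^4)^(Suc m)) * phi r m x"
proof -
  define W1 where "W1 = x/(r^2*(1-x^2)*(1-r^2*x))"
  define W2 where "W2 = x^2/(r^2*(x^2-1)*(x-r^2))"
  define A where "A = qpoch (r^4) (-(r^2)*x) m"
  define B where "B = qpoch (r^4) (-(r^2)*inverse x) m"
  define t where "t = (r^4)^m"
  have t: "t \<noteq> 0" using r by (simp add: t_def)
  have o1: "omega r x = W1 * (1+r^2*x)" unfolding W1_def by (rule omega_x)
  have o2: "omega r (inverse x) = W2 * (1+r^2*inverse x)" unfolding W2_def by (rule omega_ix[OF x(1,2,4)])
  note k = key_pm[OF r t x, of x1, folded W1_def W2_def]
  have "d_pm r x1 (phi r (Suc m)) x =
      W1 * bcoef r x1 x * ((1+r^2*x) * phi r (Suc m) (r^4*x))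
    - W1 * (1+r^2*x) * ccoef r x1 x * phi r (Suc m) x
    + W2 * bcoef r x1 (inverse x) * ((1+r^2*inverse x) * phi r (Suc m) (x/r^4))
    - W2 * (1+r^2*inverse x) * ccoef r x1 x * phi r (Suc m) x"
    unfolding d_pm_def o1 o2 by (simp add: algebra_simps)
  also have "\<dots> = A * B * (W1 * bcoef r x1 x * ((1 + r^2*x*t) * (1 + r^2*x*t*r^4) * (1 + r^2*inverse x/r^4))
       - W1 * (1+r^2*x) * ccoef r x1 x * ((1 + r^2*x*t) * (1 + r^2*inverse x*t))
       + W2 * bcoef r x1 (inverse x) * ((1 + r^2*inverse x*t) * (1 + r^2*inverse x*t*r^4) * (1 + r^2*x/r^4))
       - W2 * (1+r^2*inverse x) * ccoef r x1 x * ((1 + r^2*x*t) * (1 + r^2*inverse x*t)))"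
    unfolding phi_shift[OF r x(1)] A_def[symmetric] B_def[symmetric] t_def[symmetric]
    by (simp add: algebra_simps)
  also have "\<dots> = A * B * (alpha_pm r (x1^2) (r^4*t) * ((1 + r^2*x*t) * (1 + r^2*inverse x*t)) + beta_pm r (x1^2) (r^4*t))"
    unfolding k ..
  finally show ?thesis unfolding phi_Suc1[of r m x] A_def[symmetric] B_def[symmetric] t_def[symmetric] phi_def[of r m]
    by (simp add: algebra_simps t_def)
qed

lemma phi_0[simp]: "phi r 0 x = 1" by (simp add: phi_def)

lemma dpm_phi:
  assumes r: "r \<noteq> 0" and x: "x \<noteq> 0" "x^2 \<noteq> 1" "r^2*x \<noteq> 1" "r^2 \<noteq> x"
  shows "d_pm r x1 (phi r k) x = alpha_pm r (x1^2) ((r^4)^k) * phi r k x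
            + beta_pm r (x1^2) ((r^4)^k) * phi r (k - 1) x"
proof (cases k)
  case 0
  define W1 where "W1 = x/(r^2*(1-x^2)*(1-r^2*x))"
  define W2 where "W2 = x^2/(r^2*(x^2-1)*(x-r^2))"
  have o1: "omega r x = W1 * (1+r^2*x)" unfolding W1_def by (rule omega_x)
  have o2: "omega r (inverse x) = W2 * (1+r^2*inverse x)" unfolding W2_def by (rule omega_ix[OF x(1,2,4)])
  have "d_pm r x1 (phi r 0) x = alpha_pm r (x1^2) 1"
    unfolding d_pm_def o1 o2 phi_0 key_pm0[OF r x, of x1, folded W1_def W2_def, symmetric] by (simp add: algebra_simps)
  then show ?thesis using 0 by (simp add: beta_pm_def)
next
  case (Suc m)
  then show ?thesis using dpm_phi_Suc[OF r x] by simp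
qed

lemma dpp_phi:
  assumes r: "r \<noteq> 0" and x: "x \<noteq> 0" "x^2 \<noteq> 1" "r^2*x \<noteq> 1" "r^2 \<noteq> x"
  shows "d_pp r (phi r k) x = (1 - (r^4)^k)^2/r^4 * phi r (k - 1) x"
proof (cases k)
  case 0
  then show ?thesis by (simp add: dpp_phi_0)
next
  case (Suc m)
  then show ?thesis using dpp_phi_Suc[OF r x] by simp
qed

lemma dmm_phi_Suc:
  assumes r: "r \<noteq> 0" and x: "x \<noteq> 0" "x^2 \<noteq> 1" "r^2*x \<noteq> 1" "r^2 \<noteq> x"
  shows "d_mm r x0 x1 (phi r (Suc m)) x = gamma_mm r (x0^2) (x1^2) ((r^4)^(Suc m)) * phi r (Suc (Suc m)) x
            + alpha_mm r (x0^2) (x1^2) ((r^4)^(Suc m)) * phi r (Suc m) x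
            + beta_mm r (x0^2) (x1^2) ((r^4)^(Suc m)) * phi r m x"
proof -
  define W1 where "W1 = x/(r^2*(1-x^2)*(1-r^2*x))"
  define W2 where "W2 = x^2/(r^2*(x^2-1)*(x-r^2))"
  define A where "A = qpoch (r^4) (-(r^2)*x) m"
  define B where "B = qpoch (r^4) (-(r^2)*inverse x) m"
  define t where "t = (r^4)^m"
  have t: "t \<noteq> 0" using r by (simp add: t_def)
  have o1: "omega r x = W1 * (1+r^2*x)" unfolding W1_def by (rule omega_x)
  have o2: "omega r (inverse x) = W2 * (1+r^2*inverse x)" unfolding W2_def by (rule omega_ix[OF x(1,2,4)])
  note k = key_mm[OF r t x, of x0 x1, folded W1_def W2_def]
  have "d_mm r x0 x1 (phi r (Suc m)) x =
      W1 * (bcoef r x0 x * bcoef r x1 x) * ((1+r^2*x) * phi r (Suc m) (r^4*x))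
    - W1 * (1+r^2*x) * (ccoef r x0 x * ccoef r x1 x) * phi r (Suc m) x
    + W2 * (bcoef r x0 (inverse x) * bcoef r x1 (inverse x)) * ((1+r^2*inverse x) * phi r (Suc m) (x/r^4))
    - W2 * (1+r^2*inverse x) * (ccoef r x0 x * ccoef r x1 x) * phi r (Suc m) x"
    unfolding d_mm_def o1 o2 by (simp add: algebra_simps)
  also have "\<dots> = A * B * (W1 * (bcoef r x0 x * bcoef r x1 x) * ((1 + r^2*x*t) * (1 + r^2*x*t*r^4) * (1 + r^2*inverse x/r^4))
       - W1 * (1+r^2*x) * (ccoef r x0 x * ccoef r x1 x) * ((1 + r^2*x*t) * (1 + r^2*inverse x*t))
       + W2 * (bcoef r x0 (inverse x) * bcoef r x1 (inverse x)) * ((1 + r^2*inverse x*t) * (1 + r^2*inverse x*t*r^4) * (1 + r^2*x/r^4))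
       - W2 * (1+r^2*inverse x) * (ccoef r x0 x * ccoef r x1 x) * ((1 + r^2*x*t) * (1 + r^2*inverse x*t)))"
    unfolding phi_shift[OF r x(1)] A_def[symmetric] B_def[symmetric] t_def[symmetric]
    by (simp add: algebra_simps)
  also have "\<dots> = A * B * (gamma_mm r (x0^2) (x1^2) (r^4*t) * (((1 + r^2*x*t) * (1 + r^2*inverse x*t)) * ((1 + r^2*x*(r^4*t)) * (1 + r^2*inverse x*(r^4*t))))
       + alpha_mm r (x0^2) (x1^2) (r^4*t) * ((1 + r^2*x*t) * (1 + r^2*inverse x*t)) + beta_mm r (x0^2) (x1^2) (r^4*t))"
    unfolding k ..
  finally show ?thesis unfolding phi_Suc2[of r m x] phi_Suc1[of r m x] A_def[symmetric] B_def[symmetric] t_def[symmetric] phi_def[of r m]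
    by (simp add: algebra_simps t_def)
qed

lemma dmm_phi:
  assumes r: "r \<noteq> 0" and x: "x \<noteq> 0" "x^2 \<noteq> 1" "r^2*x \<noteq> 1" "r^2 \<noteq> x"
  shows "d_mm r x0 x1 (phi r k) x = gamma_mm r (x0^2) (x1^2) ((r^4)^k) * phi r (Suc k) x
            + alpha_mm r (x0^2) (x1^2) ((r^4)^k) * phi r k x
            + beta_mm r (x0^2) (x1^2) ((r^4)^k) * phi r (k - 1) x"
proof (cases k)
  case 0
  define W1 where "W1 = x/(r^2*(1-x^2)*(1-r^2*x))"
  define W2 where "W2 = x^2/(r^2*(x^2-1)*(x-r^2))"
  have o1: "omega r x = W1 * (1+r^2*x)" unfolding W1_def by (rule omega_x)
  have o2: "omega r (inverse x) = W2 * (1+r^2*inverse x)" unfolding W2_def by (rule omega_ix[OF x(1,2,4)])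
  have p1: "phi r (Suc 0) x = (1 + r^2*x) * (1 + r^2*inverse x)" by (simp add: phi_Suc1)
  have "d_mm r x0 x1 (phi r 0) x = gamma_mm r (x0^2) (x1^2) 1 * ((1 + r^2*x) * (1 + r^2*inverse x)) + alpha_mm r (x0^2) (x1^2) 1"
    unfolding d_mm_def o1 o2 phi_0 key_mm0[OF r x, of x0 x1, folded W1_def W2_def, symmetric] by (simp add: algebra_simps)
  then show ?thesis using 0 p1 by (simp add: beta_mm_def)
next
  case (Suc m)
  then show ?thesis using dmm_phi_Suc[OF r x] by simp
qed

definition pre :: "complex \<Rightarrow> nat \<Rightarrow> complex \<Rightarrow> complex \<Rightarrow> complex" where
  "pre r n y0 y1 = (-1) ^ n * inverse (r ^ (2 * n)) *
      (qpoch (r^4) (r^4) n * qpoch (r^4) (r^4 / y0\<^sup>2) n * qpoch (r^4) (r^4 / y1\<^sup>2) n)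
        / qpoch (r^4) ((r^4) ^ (n + 1) / (y0\<^sup>2 * y1\<^sup>2)) n"

definition cf :: "complex \<Rightarrow> nat \<Rightarrow> complex \<Rightarrow> complex \<Rightarrow> nat \<Rightarrow> complex" where
  "cf r n y0 y1 k = (r^4) ^ k *
         (qpoch (r^4) (inverse ((r^4) ^ n)) k * qpoch (r^4) ((r^4) ^ (n + 1) / (y0\<^sup>2 * y1\<^sup>2)) k)
         / (qpoch (r^4) (r^4) k * qpoch (r^4) (r^4) k * qpoch (r^4) (r^4 / y0\<^sup>2) k * qpoch (r^4) (r^4 / y1\<^sup>2) k)"

lemma AWP_eq: "AWP r n x y0 y1 = pre r n y0 y1 * (\<Sum>k = 0..n. cf r n y0 y1 k * phi r k x)"
  unfolding AWP_def pre_def cf_def phi_def Let_def by (simp add: mult.assoc)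

lemma dpp_sum: "finite S \<Longrightarrow> d_pp r (\<lambda>y. \<Sum>k\<in>S. a k * f k y) x = (\<Sum>k\<in>S. a k * d_pp r (f k) x)"
  by (induction S rule: finite_induct) (simp_all add: d_pp_def algebra_simps)

lemma dpm_sum: "finite S \<Longrightarrow> d_pm r x1 (\<lambda>y. \<Sum>k\<in>S. a k * f k y) x = (\<Sum>k\<in>S. a k * d_pm r x1 (f k) x)"
  by (induction S rule: finite_induct) (simp_all add: d_pm_def algebra_simps)

lemma dmm_sum: "finite S \<Longrightarrow> d_mm r x0 x1 (\<lambda>y. \<Sum>k\<in>S. a k * f k y) x = (\<Sum>k\<in>S. a k * d_mm r x0 x1 (f k) x)"
  by (induction S rule: finite_induct) (simp_all add: d_mm_def algebra_simps)

lemma dpp_const: "d_pp r (\<lambda>y. c * f y) x = c * d_pp r f x"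
  by (simp add: d_pp_def algebra_simps)
lemma dpm_const: "d_pm r x1 (\<lambda>y. c * f y) x = c * d_pm r x1 f x"
  by (simp add: d_pm_def algebra_simps)
lemma dmm_const: "d_mm r x0 x1 (\<lambda>y. c * f y) x = c * d_mm r x0 x1 f x"
  by (simp add: d_mm_def algebra_simps)

lemma qp_nz_le: "qpoch q a n \<noteq> 0 \<Longrightarrow> j \<le> n \<Longrightarrow> qpoch q a j \<noteq> 0"
proof (induction n)
  case 0 then show ?case by simp
next
  case (Suc n) then show ?case by (cases "j = Suc n") (auto simp: qp_Suc)
qed

lemma qp_nz_factor: "qpoch q a n \<noteq> 0 \<Longrightarrow> i < n \<Longrightarrow> 1 - a * q ^ i \<noteq> 0"
  unfolding qpoch_def by auto

lemma qpow_ne1: fixes q :: complex assumes "0 < norm q" "norm q < 1" "i \<ge> 1" shows "q ^ i \<noteq> 1"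
proof
  assume "q ^ i = 1"
  then have "norm q ^ i = 1" by (metis norm_one norm_power)
  moreover have "norm q ^ i < 1" using assms by (simp add: power_less_one_iff)
  ultimately show False by simp
qed

lemma qp_qq_nz: fixes q :: complex assumes "0 < norm q" "norm q < 1" shows "qpoch q q j \<noteq> 0"
  unfolding qpoch_def using qpow_ne1[OF assms] by (auto simp: power_Suc[symmetric] simp del: power_Suc)

lemma tw_pp:
  fixes r x0 x1 :: complex
  assumes q: "0 < norm (r^4)" "norm (r^4) < 1"
    and gY: "AW_generic r (Suc m) (r^2*x0) (r^2*x1)" and j: "j \<le> m"
  shows "pre r (Suc m) (r^2*x0) (r^2*x1) * (cf r (Suc m) (r^2*x0) (r^2*x1) (Suc j) * ((1 - (r^4)^(Suc j))^2/r^4))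
       = inverse (r ^ (4 * Suc m + 2)) * (1 - r ^ (4 * Suc m))\<^sup>2 * (pre r m x0 x1 * cf r m x0 x1 j)"
proof -
  define q where "q = r^4"
  have r: "r \<noteq> 0" using q by auto
  have q0: "q \<noteq> 0" using r by (simp add: q_def)
  have x0: "x0 \<noteq> 0" and x1: "x1 \<noteq> 0" using gY by (auto simp: AW_generic_def Let_def)
  define T where "T = q^m"
  define t where "t = q^j"
  define R where "R = r^(2*m)"
  define a0 where "a0 = q/(r^2*x0)^2"
  define a1 where "a1 = q/(r^2*x1)^2"
  define w where "w = q^(Suc m + 1)/((r^2*x0)^2*(r^2*x1)^2)"
  define v where "v = inverse (q^(Suc m))"
  have a0q: "a0 * q = q/x0^2" unfolding a0_def q_def using r by (simp add: field_simps eval_nat_numeral)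
  have a1q: "a1 * q = q/x1^2" unfolding a1_def q_def using r by (simp add: field_simps eval_nat_numeral)
  have wq: "w * q = q^(m+1)/(x0^2*x1^2)" unfolding w_def q_def using r by (simp add: field_simps eval_nat_numeral)
  have vq: "v * q = inverse (q^m)" unfolding v_def using q0 by (simp add: field_simps)
  have wT: "w = T/(x0^2*x1^2)" unfolding w_def T_def q_def using r by (simp add: field_simps eval_nat_numeral)
  have vT: "v = inverse (q*T)" unfolding v_def T_def by simp
  define Qm where "Qm = qpoch q q m"
  define Qj where "Qj = qpoch q q j"
  define E0m where "E0m = qpoch q (q/x0^2) m"
  define E1m where "E1m = qpoch q (q/x1^2) m"
  define E0j where "E0j = qpoch q (q/x0^2) j"
  define E1j where "E1j = qpoch q (q/x1^2) j"
  define Wm where "Wm = qpoch q (q^(m+1)/(x0^2*x1^2)) m"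
  define Wj where "Wj = qpoch q (q^(m+1)/(x0^2*x1^2)) j"
  define Nj where "Nj = qpoch q (inverse (q^m)) j"
  have gY': "qpoch q a0 (Suc m) \<noteq> 0" "qpoch q a1 (Suc m) \<noteq> 0" "qpoch q w (Suc m) \<noteq> 0"
    using gY unfolding AW_generic_def Let_def a0_def a1_def w_def q_def by auto
  have e1: "qpoch q a0 (Suc m) = (1 - a0) * E0m" unfolding E0m_def qp_Suc' a0q ..
  have e2: "qpoch q a1 (Suc m) = (1 - a1) * E1m" unfolding E1m_def qp_Suc' a1q ..
  have e3: "qpoch q w (Suc m) = (1 - w) * Wm" unfolding Wm_def qp_Suc' wq ..
  have e4: "qpoch q a0 (Suc j) = (1 - a0) * E0j" unfolding E0j_def qp_Suc' a0q ..
  have e5: "qpoch q a1 (Suc j) = (1 - a1) * E1j" unfolding E1j_def qp_Suc' a1q ..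
  have e6: "qpoch q w (Suc j) = (1 - w) * Wj" unfolding Wj_def qp_Suc' wq ..
  have e7: "qpoch q v (Suc j) = (1 - v) * Nj" unfolding Nj_def qp_Suc' vq ..
  have e8: "qpoch q q (Suc m) = Qm * (1 - q*T)" unfolding Qm_def qp_Suc T_def by simp
  have e9: "qpoch q q (Suc j) = Qj * (1 - q*t)" unfolding Qj_def qp_Suc t_def by simp
  have nz0: "1 - a0 \<noteq> 0" "1 - a1 \<noteq> 0" "1 - w \<noteq> 0" "E0m \<noteq> 0" "E1m \<noteq> 0" "Wm \<noteq> 0"
    using gY' unfolding e1 e2 e3 by auto
  have nz: "1 - a0 \<noteq> 0" "1 - a1 \<noteq> 0" "1 - w \<noteq> 0" "E0j \<noteq> 0" "E1j \<noteq> 0" "Wm \<noteq> 0"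
    using nz0 qp_nz_le[OF _ j] unfolding E0j_def E0m_def E1j_def E1m_def by auto
  have nzq: "Qj \<noteq> 0" "1 - q*t \<noteq> 0" "T \<noteq> 0" "R \<noteq> 0" "t \<noteq> 0"
    using qp_qq_nz[of q j] qpow_ne1[of q "Suc j"] q r unfolding Qj_def t_def q_def T_def R_def by auto
  have L: "pre r (Suc m) (r^2*x0) (r^2*x1) * (cf r (Suc m) (r^2*x0) (r^2*x1) (Suc j) * ((1 - (r^4)^(Suc j))^2/r^4))
    = (-1)^(Suc m) * inverse (r^2*R) * (Qm*(1-q*T) * ((1-a0)*E0m) * ((1-a1)*E1m)) / ((1-w)*Wm)
      * ((q*t) * (((1-v)*Nj) * ((1-w)*Wj)) / (Qj*(1-q*t) * (Qj*(1-q*t)) * ((1-a0)*E0j) * ((1-a1)*E1j)))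
      * ((1 - q*t)^2/q)"
    unfolding pre_def cf_def q_def[symmetric] a0_def[symmetric] a1_def[symmetric] w_def[symmetric] v_def[symmetric]
    unfolding e1 e2 e3 e4 e5 e6 e7 e8 e9
    by (simp add: R_def t_def power_add) (simp add: power2_eq_square mult_ac)
  have Rr: "pre r m x0 x1 * cf r m x0 x1 j = (-1)^m * inverse R * (Qm*E0m*E1m)/Wm * (t * (Nj*Wj)/(Qj*Qj*E0j*E1j))"
    unfolding pre_def cf_def q_def[symmetric] Qm_def Qj_def E0m_def E1m_def E0j_def E1j_def Wm_def Wj_def Nj_def R_def t_def
    by simp
  have K: "inverse (r ^ (4 * Suc m + 2)) * (1 - r ^ (4 * Suc m))\<^sup>2 = inverse (q*T*r^2) * (1 - q*T)^2"
  proof -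
    have p1: "r^(4*Suc m + 2) = r^4*(r^4)^m*r^2" by (simp add: power_add power_mult)
    have p2: "r^(4*Suc m) = r^4*(r^4)^m" by (simp add: power_add power_mult)
    show ?thesis unfolding p1 p2 q_def T_def ..
  qed
  show ?thesis unfolding L K Rr vT using nz nzq q0 r by (simp add: divide_simps) algebra
qed

lemma case_pp:
  fixes r x x0 x1 :: complex
  assumes q: "0 < norm (r^4)" "norm (r^4) < 1"
    and x: "x \<noteq> 0" "x^2 \<noteq> 1" "r^2*x \<noteq> 1" "r^2 \<noteq> x"
    and gY: "AW_generic r (Suc m) (r^2*x0) (r^2*x1)"
  shows "d_pp r (\<lambda>y. AWP r (Suc m) y (r^2*x0) (r^2*x1)) x
        = inverse (r ^ (4 * Suc m + 2)) * (1 - r ^ (4 * Suc m))\<^sup>2 * AWP r m x x0 x1"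
proof -
  have r: "r \<noteq> 0" using q by auto
  let ?P = "pre r (Suc m) (r^2*x0) (r^2*x1)"
  let ?c = "cf r (Suc m) (r^2*x0) (r^2*x1)"
  let ?K = "inverse (r ^ (4 * Suc m + 2)) * (1 - r ^ (4 * Suc m))\<^sup>2"
  have "d_pp r (\<lambda>y. AWP r (Suc m) y (r^2*x0) (r^2*x1)) x
      = d_pp r (\<lambda>y. ?P * (\<Sum>k = 0..Suc m. ?c k * phi r k y)) x"
    unfolding AWP_eq ..
  also have "\<dots> = ?P * (\<Sum>k = 0..Suc m. ?c k * ((1 - (r^4)^k)^2/r^4 * phi r (k - 1) x))"
    unfolding dpp_const dpp_sum[OF finite_atLeastAtMost] dpp_phi[OF r x] ..
  also have "\<dots> = ?P * (\<Sum>j = 0..m. ?c (Suc j) * ((1 - (r^4)^(Suc j))^2/r^4 * phi r j x))"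
    by (simp add: sum.atLeast0_atMost_Suc_shift del: sum.cl_ivl_Suc)
  also have "\<dots> = (\<Sum>j = 0..m. (?P * (?c (Suc j) * ((1 - (r^4)^(Suc j))^2/r^4))) * phi r j x)"
    by (simp add: sum_distrib_left mult.assoc)
  also have "\<dots> = (\<Sum>j = 0..m. (?K * (pre r m x0 x1 * cf r m x0 x1 j)) * phi r j x)"
  proof (rule sum.cong[OF refl])
    fix j assume "j \<in> {0..m}"
    then have jm: "j \<le> m" by simp
    show "(?P * (?c (Suc j) * ((1 - (r^4)^(Suc j))^2/r^4))) * phi r j x = (?K * (pre r m x0 x1 * cf r m x0 x1 j)) * phi r j x"
      unfolding tw_pp[OF q gY jm] ..
  qed
  also have "\<dots> = ?K * AWP r m x x0 x1"
    unfolding AWP_eq by (simp add: sum_distrib_left mult.assoc)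
  finally show ?thesis .
qed


lemma cf_Suc: "cf r n y0 y1 (Suc j) = cf r n y0 y1 j *
   (r^4 * (1 - inverse ((r^4)^n) * (r^4)^j) * (1 - (r^4)^(n+1)/(y0^2*y1^2) * (r^4)^j)
    / ((1 - r^4*(r^4)^j) * (1 - r^4*(r^4)^j) * (1 - r^4/y0^2*(r^4)^j) * (1 - r^4/y1^2*(r^4)^j)))"
  unfolding cf_def qp_Suc by (simp add: divide_inverse inverse_mult_distrib mult_ac)

lemma scal_pm_gen:
  fixes q s t T u B C1 D E G H V :: complex
  assumes nz: "q \<noteq> 0" "s \<noteq> 0" "t \<noteq> 0" "T \<noteq> 0" "B \<noteq> 0" "C1 \<noteq> 0" "D \<noteq> 0" "E \<noteq> 0"
    and C: "T*B*D - (T - t)*V = t*G*H"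
  shows "(G/B) * ((u*B)^2/(t*(q*s))) + (G/B) * (q*((T-t)/T)*V/(E^2*D*C1)) * (-(E^2*(u*B)*(u*C1))/(q*t*(q*s)))
       = inverse (T*q*s) * (u*G)^2 * (H/D)"
proof -
  have "(G/B) * ((u*B)^2/(t*(q*s))) + (G/B) * (q*((T-t)/T)*V/(E^2*D*C1)) * (-(E^2*(u*B)*(u*C1))/(q*t*(q*s)))
      = G*u^2/(q*s) * (T*B*D - (T - t)*V)/(t*T*D)"
    using nz by (simp add: divide_simps) (simp add: algebra_simps power2_eq_square)
  also have "\<dots> = inverse (T*q*s) * (u*G)^2 * (H/D)"
    unfolding C using nz by (simp add: divide_simps) (simp add: algebra_simps power2_eq_square)
  finally show ?thesis .
qed

lemma comb: fixes M g a b rho k h :: complex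
  shows "g*a + g*rho*b = k*h \<Longrightarrow> M*g*(a + rho*b) = k*(M*h)"
  by algebra

lemma tw_pm:
  fixes r x0 x1 :: complex
  assumes q: "0 < norm (r^4)" "norm (r^4) < 1"
    and gY: "AW_generic r n (r^2*x0) (x1/r^2)" and gX: "AW_generic r n x0 x1"
    and n1: "n \<ge> 1" and j: "j \<le> n"
  shows "pre r n (r^2*x0) (x1/r^2) * (cf r n (r^2*x0) (x1/r^2) j * alpha_pm r (x1^2) ((r^4)^j)
           + cf r n (r^2*x0) (x1/r^2) (Suc j) * beta_pm r (x1^2) ((r^4)^(Suc j)))
       = inverse (r ^ (4 * n + 6)) * (x1\<^sup>2 - r ^ (4 * (n + 1)))\<^sup>2 * (pre r n x0 x1 * cf r n x0 x1 j)"
proof -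
  define q where "q = r^4"
  define s where "s = r^2"
  have r: "r \<noteq> 0" using q by auto
  have q0: "q \<noteq> 0" and s0: "s \<noteq> 0" using r by (simp_all add: q_def s_def)
  have qs: "q = s^2" unfolding q_def s_def by simp
  have x0: "x0 \<noteq> 0" and x1: "x1 \<noteq> 0" using gX by (auto simp: AW_generic_def Let_def)
  define T where "T = q^n"
  define t where "t = q^j"
  define R where "R = r^(2*n)"
  define a0 where "a0 = q/(r^2*x0)^2"
  define a1 where "a1 = q/(x1/r^2)^2"
  define b0 where "b0 = q/x0^2"
  define b1 where "b1 = q/x1^2"
  define w where "w = q^(n+1)/(x0^2*x1^2)"
  define v where "v = inverse (q^n)"
  have b0e: "a0 * q = b0" unfolding a0_def b0_def q_def using r by (simp add: field_simps eval_nat_numeral)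
  have a1e: "a1 = b1 * q" unfolding a1_def b1_def q_def using r by (simp add: field_simps eval_nat_numeral)
  have wY: "q^(n+1)/((r^2*x0)^2*(x1/r^2)^2) = w" unfolding w_def using r by (simp add: field_simps eval_nat_numeral)
  have x1e: "x1^2 = q/b1" unfolding b1_def using x1 q0 by simp
  have b10: "b1 \<noteq> 0" unfolding b1_def using x1 q0 by simp
  have wT: "w = T*a0*b1" unfolding w_def T_def a0_def b1_def q_def using r by (simp add: field_simps eval_nat_numeral)
  have vT: "v = 1/T" unfolding v_def T_def by (simp add: field_simps)
  define Qn where "Qn = qpoch q q n"
  define Qj where "Qj = qpoch q q j"
  define A0 where "A0 = qpoch q a0 j"
  define A0n where "A0n = qpoch q a0 n"
  define B1 where "B1 = qpoch q b1 j"
  define B1n where "B1n = qpoch q b1 n"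
  define Wn where "Wn = qpoch q w n"
  define Wj where "Wj = qpoch q w j"
  define Nj where "Nj = qpoch q v j"
  have gY': "A0n \<noteq> 0" "qpoch q a1 n \<noteq> 0"
    using gY unfolding AW_generic_def Let_def A0n_def a0_def a1_def q_def by auto
  have gX': "qpoch q b0 n \<noteq> 0" "B1n \<noteq> 0" "Wn \<noteq> 0"
    using gX unfolding AW_generic_def Let_def B1n_def b0_def b1_def Wn_def w_def q_def by auto
  have na0: "1 - a0 \<noteq> 0" using qp_nz_factor[OF gY'(1)[unfolded A0n_def], of 0] n1 by simp
  have nb1: "1 - b1 \<noteq> 0" using qp_nz_factor[OF gX'(2)[unfolded B1n_def], of 0] n1 by simp
  have nA0: "A0 \<noteq> 0" using qp_nz_le[OF gY'(1)[unfolded A0n_def] j] unfolding A0_def .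
  have nB1: "B1 \<noteq> 0" using qp_nz_le[OF gX'(2)[unfolded B1n_def] j] unfolding B1_def .
  have nb1t: "1 - b1 * t \<noteq> 0"
  proof (cases "j < n")
    case True then show ?thesis using qp_nz_factor[OF gX'(2)[unfolded B1n_def] True] by (simp add: t_def)
  next
    case False
    then have jn: "j = n" using j by simp
    obtain p where p: "n = Suc p" using n1 by (cases n) auto
    have "1 - a1 * q^p \<noteq> 0" using qp_nz_factor[OF gY'(2), of p] p by simp
    then show ?thesis unfolding a1e t_def jn p by (simp add: algebra_simps)
  qed
  have f1: "qpoch q b0 j = A0*(1 - a0*t)/(1-a0)"
  proof -
    have "(1-a0) * qpoch q b0 j = A0*(1 - a0*t)"
      using qp_Suc'[of q a0 j] qp_Suc[of q a0 j] unfolding b0e A0_def t_def by simp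
    then show ?thesis using na0 by (simp add: field_simps)
  qed
  have f2: "qpoch q b0 n = A0n*(1 - a0*T)/(1-a0)"
  proof -
    have "(1-a0) * qpoch q b0 n = A0n*(1 - a0*T)"
      using qp_Suc'[of q a0 n] qp_Suc[of q a0 n] unfolding b0e A0n_def T_def by simp
    then show ?thesis using na0 by (simp add: field_simps)
  qed
  have f3: "qpoch q a1 j = B1*(1 - b1*t)/(1-b1)"
  proof -
    have "(1-b1) * qpoch q a1 j = B1*(1 - b1*t)"
      using qp_Suc'[of q b1 j] qp_Suc[of q b1 j] unfolding a1e B1_def t_def by simp
    then show ?thesis using nb1 by (simp add: field_simps)
  qed
  have f4: "qpoch q a1 n = B1n*(1 - b1*T)/(1-b1)"
  proof -
    have "(1-b1) * qpoch q a1 n = B1n*(1 - b1*T)"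
      using qp_Suc'[of q b1 n] qp_Suc[of q b1 n] unfolding a1e B1n_def T_def by simp
    then show ?thesis using nb1 by (simp add: field_simps)
  qed
  have f5: "qpoch q a0 (Suc j) = A0*(1 - a0*t)" unfolding qp_Suc A0_def t_def ..
  have f6: "qpoch q a1 (Suc j) = B1*(1 - b1*t)/(1-b1)*(1 - b1*q*t)" unfolding qp_Suc unfolding f3 unfolding a1e t_def by (simp add: mult.assoc)
  have f7: "qpoch q w (Suc j) = Wj*(1 - w*t)" unfolding qp_Suc Wj_def t_def ..
  have f8: "qpoch q v (Suc j) = Nj*(1 - v*t)" unfolding qp_Suc Nj_def t_def ..
  have f9: "qpoch q q (Suc j) = Qj*(1 - q*t)" unfolding qp_Suc Qj_def t_def by simp
  have nQ: "Qj \<noteq> 0" "1 - q*t \<noteq> 0" "T \<noteq> 0" "R \<noteq> 0" "t \<noteq> 0"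
    using qp_qq_nz[of q j] qpow_ne1[of q "Suc j"] q r unfolding Qj_def t_def q_def T_def R_def by auto
  have al: "alpha_pm r (x1^2) ((r^4)^j) = (q/b1 - q*t)^2/(t*(q*s))"
    unfolding alpha_pm_def x1e q_def[symmetric] t_def[symmetric] by (simp add: q_def s_def eval_nat_numeral)
  have be: "beta_pm r (x1^2) ((r^4)^(Suc j)) = -((1-q*t)^2*(q/b1-q*t)*(q/b1-q*(q*t)))/(q*t*(q*s))"
    unfolding beta_pm_def x1e q_def[symmetric] t_def[symmetric] by (simp add: q_def s_def eval_nat_numeral t_def)
  have K: "inverse (r ^ (4 * n + 6)) * (x1\<^sup>2 - r ^ (4 * (n + 1)))\<^sup>2 = inverse (T*q*s) * (q/b1 - q*T)^2"
  proof -
    have p1: "r^(4*n+6) = (r^4)^n*r^4*r^2" by (simp add: power_add power_mult[symmetric] mult.commute)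
    have p2: "r^(4*(n+1)) = r^4*(r^4)^n" by (simp add: power_add power_mult[symmetric] mult.commute)
    show ?thesis unfolding p1 p2 x1e T_def q_def s_def ..
  qed
  define M where "M = (-1)^n * inverse R * (Qn * A0n * B1n) / Wn * (t * (Nj * Wj) / (Qj * Qj * A0 * B1))"
  have L1: "pre r n (r^2*x0) (x1/r^2) * cf r n (r^2*x0) (x1/r^2) j = M * ((1 - b1*T)/(1 - b1*t))"
  proof -
    have "pre r n (r^2*x0) (x1/r^2) * cf r n (r^2*x0) (x1/r^2) j
      = (-1)^n * inverse R * (Qn * A0n * (B1n*(1 - b1*T)/(1-b1))) / Wn *
       (t * (Nj * Wj) / (Qj * Qj * A0 * (B1*(1 - b1*t)/(1-b1))))"
      unfolding pre_def cf_def q_def[symmetric] a0_def[symmetric] a1_def[symmetric] wY v_def[symmetric]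
        R_def[symmetric] t_def[symmetric]
      unfolding A0_def[symmetric] A0n_def[symmetric] Qn_def[symmetric] Qj_def[symmetric] Wn_def[symmetric]
        Wj_def[symmetric] Nj_def[symmetric] f3 f4
      by (simp add: t_def)
    also have "\<dots> = M * ((1 - b1*T)/(1 - b1*t))"
      unfolding M_def using nb1 nb1t nQ nA0 nB1 gX'(3) by (simp add: divide_simps; algebra)
    finally show ?thesis .
  qed
  have R1: "pre r n x0 x1 * cf r n x0 x1 j = M * ((1 - a0*T)/(1 - a0*t))"
  proof -
    have "pre r n x0 x1 * cf r n x0 x1 j = (-1)^n * inverse R * (Qn * (A0n*(1 - a0*T)/(1-a0)) * B1n) / Wn
       * (t * (Nj * Wj) / (Qj * Qj * (A0*(1 - a0*t)/(1-a0)) * B1))"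
      unfolding pre_def cf_def q_def[symmetric] b0_def[symmetric] b1_def[symmetric] w_def[symmetric] v_def[symmetric]
        R_def[symmetric] t_def[symmetric]
      unfolding A0_def[symmetric] A0n_def[symmetric] Qn_def[symmetric] Qj_def[symmetric] Wn_def[symmetric]
        Wj_def[symmetric] Nj_def[symmetric] B1_def[symmetric] B1n_def[symmetric] f1 f2
      by simp
    also have "\<dots> = M * ((1 - a0*T)/(1 - a0*t))"
      unfolding M_def using na0 nQ nA0 nB1 gX'(3) by (simp add: divide_simps; algebra)
    finally show ?thesis .
  qed
  define u where "u = q/b1"
  define B where "B = 1 - b1*t"
  define C1 where "C1 = 1 - b1*q*t"
  define D where "D = 1 - a0*t"
  define E where "E = 1 - q*t"
  define G where "G = 1 - b1*T"
  define H where "H = 1 - a0*T"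
  define V where "V = 1 - w*t"
  define rho where "rho = q*((T-t)/T)*V/(E^2*D*C1)"
  have cS: "cf r n (r^2*x0) (x1/r^2) (Suc j) = cf r n (r^2*x0) (x1/r^2) j * rho"
  proof -
    have vt: "1 - v*t = (T-t)/T" unfolding vT using nQ by (simp add: field_simps)
    show ?thesis unfolding cf_Suc q_def[symmetric] a0_def[symmetric] a1_def[symmetric] wY v_def[symmetric]
        t_def[symmetric]
      unfolding vt rho_def V_def E_def D_def C1_def a1e by (simp add: power2_eq_square mult_ac)
  qed
  have al': "alpha_pm r (x1^2) ((r^4)^j) = (u*B)^2/(t*(q*s))"
    unfolding al u_def B_def using b10 by (simp add: field_simps)
  have be': "beta_pm r (x1^2) ((r^4)^(Suc j)) = -(E^2*(u*B)*(u*C1))/(q*t*(q*s))"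
    unfolding be u_def B_def C1_def E_def using b10 by (simp add: field_simps)
  have K': "inverse (r ^ (4 * n + 6)) * (x1\<^sup>2 - r ^ (4 * (n + 1)))\<^sup>2 = inverse (T*q*s) * (u*G)^2"
    unfolding K u_def G_def using b10 by (simp add: field_simps)
  have L1': "pre r n (r^2*x0) (x1/r^2) * cf r n (r^2*x0) (x1/r^2) j = M * (G/B)"
    unfolding L1 G_def B_def ..
  have R1': "pre r n x0 x1 * cf r n x0 x1 j = M * (H/D)"
    unfolding R1 H_def D_def ..
  have split: "pre r n (r^2*x0) (x1/r^2) * (cf r n (r^2*x0) (x1/r^2) j * alpha_pm r (x1^2) ((r^4)^j)
           + cf r n (r^2*x0) (x1/r^2) (Suc j) * beta_pm r (x1^2) ((r^4)^(Suc j)))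
      = (pre r n (r^2*x0) (x1/r^2) * cf r n (r^2*x0) (x1/r^2) j) * (alpha_pm r (x1^2) ((r^4)^j)
        + rho * beta_pm r (x1^2) ((r^4)^(Suc j)))"
    unfolding cS by (simp add: algebra_simps)
  have S: "(G/B) * ((u*B)^2/(t*(q*s))) + (G/B) * rho * (-(E^2*(u*B)*(u*C1))/(q*t*(q*s)))
       = inverse (T*q*s) * (u*G)^2 * (H/D)"
  proof (cases "j < n")
    case True
    have na0t: "D \<noteq> 0" using qp_nz_factor[OF gY'(1)[unfolded A0n_def] True] by (simp add: t_def D_def)
    have na1t: "C1 \<noteq> 0" using qp_nz_factor[OF gY'(2) True] by (simp add: t_def a1e C1_def)
    have C: "T*B*D - (T - t)*V = t*G*H" unfolding B_def D_def V_def G_def H_def wT by algebra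
    have nE: "E \<noteq> 0" "B \<noteq> 0" using nQ nb1t by (simp_all add: E_def B_def)
    show ?thesis unfolding rho_def by (rule scal_pm_gen[OF q0 s0 nQ(5) nQ(3) nE(2) na1t na0t nE(1) C])
  next
    case False
    then have tT: "t = T" using j by (simp add: t_def T_def)
    have "B = G" "D = H" unfolding B_def G_def D_def H_def tT by simp_all
    moreover have "B \<noteq> 0" using nb1t by (simp add: B_def)
    moreover have "H \<noteq> 0"
    proof -
      obtain p where p: "n = Suc p" using n1 by (cases n) auto
      have "1 - b0 * q^p \<noteq> 0" using qp_nz_factor[OF gX'(1), of p] p by simp
      then show ?thesis unfolding H_def T_def p b0e[symmetric] by (simp add: algebra_simps)
    qed
    ultimately show ?thesis unfolding rho_def tT using nQ q0 s0
      by (simp add: divide_simps)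
  qed
  show ?thesis unfolding split unfolding L1' R1' K' al' be' by (rule comb[OF S])
qed

lemma cf_vanish: assumes "r \<noteq> 0" shows "cf r n y0 y1 (Suc n) = 0"
proof -
  have "qpoch (r^4) (inverse ((r^4)^n)) (Suc n) = 0"
    unfolding qp_Suc using assms by simp
  then show ?thesis unfolding cf_def by simp
qed

lemma case_pm:
  fixes r x x0 x1 :: complex
  assumes q: "0 < norm (r^4)" "norm (r^4) < 1"
    and x: "x \<noteq> 0" "x^2 \<noteq> 1" "r^2*x \<noteq> 1" "r^2 \<noteq> x"
    and gY: "AW_generic r n (r^2*x0) (x1/r^2)" and gX: "AW_generic r n x0 x1" and n1: "n \<ge> 1"
  shows "d_pm r x1 (\<lambda>y. AWP r n y (r^2*x0) (x1/r^2)) x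
        = inverse (r ^ (4 * n + 6)) * (x1\<^sup>2 - r ^ (4 * (n + 1)))\<^sup>2 * AWP r n x x0 x1"
proof -
  have r: "r \<noteq> 0" using q by auto
  let ?P = "pre r n (r^2*x0) (x1/r^2)"
  let ?c = "cf r n (r^2*x0) (x1/r^2)"
  let ?K = "inverse (r ^ (4 * n + 6)) * (x1\<^sup>2 - r ^ (4 * (n + 1)))\<^sup>2"
  let ?a = "\<lambda>k. alpha_pm r (x1^2) ((r^4)^k)"
  let ?b = "\<lambda>k. beta_pm r (x1^2) ((r^4)^k)"
  have b0: "?b 0 = 0" by (simp add: beta_pm_def)
  have "d_pm r x1 (\<lambda>y. AWP r n y (r^2*x0) (x1/r^2)) x
      = d_pm r x1 (\<lambda>y. ?P * (\<Sum>k = 0..n. ?c k * phi r k y)) x"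
    unfolding AWP_eq ..
  also have "\<dots> = ?P * (\<Sum>k = 0..n. ?c k * (?a k * phi r k x + ?b k * phi r (k - 1) x))"
    unfolding dpm_const dpm_sum[OF finite_atLeastAtMost] dpm_phi[OF r x] ..
  also have "\<dots> = ?P * ((\<Sum>k = 0..n. ?c k * ?a k * phi r k x) + (\<Sum>k = 0..n. ?c k * ?b k * phi r (k - 1) x))"
    by (simp add: sum.distrib algebra_simps)
  also have "(\<Sum>k = 0..n. ?c k * ?b k * phi r (k - 1) x) = (\<Sum>k = 0..Suc n. ?c k * ?b k * phi r (k - 1) x)"
    using cf_vanish[OF r] by simp
  also have "\<dots> = (\<Sum>j = 0..n. ?c (Suc j) * ?b (Suc j) * phi r j x)"
    using b0 by (simp add: sum.atLeast0_atMost_Suc_shift del: sum.cl_ivl_Suc)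
  also have "?P * ((\<Sum>k = 0..n. ?c k * ?a k * phi r k x) + (\<Sum>j = 0..n. ?c (Suc j) * ?b (Suc j) * phi r j x))
      = (\<Sum>j = 0..n. (?P * (?c j * ?a j + ?c (Suc j) * ?b (Suc j))) * phi r j x)"
    by (simp add: sum.distrib sum_distrib_left algebra_simps)
  also have "\<dots> = (\<Sum>j = 0..n. (?K * (pre r n x0 x1 * cf r n x0 x1 j)) * phi r j x)"
  proof (rule sum.cong[OF refl])
    fix j assume "j \<in> {0..n}"
    then have jn: "j \<le> n" by simp
    show "(?P * (?c j * ?a j + ?c (Suc j) * ?b (Suc j))) * phi r j x = (?K * (pre r n x0 x1 * cf r n x0 x1 j)) * phi r j x"
      unfolding tw_pm[OF q gY gX n1 jn] ..
  qed
  also have "\<dots> = ?K * AWP r n x x0 x1"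
    unfolding AWP_eq by (simp add: sum_distrib_left mult.assoc)
  finally show ?thesis .
qed


definition amm :: "complex \<Rightarrow> complex \<Rightarrow> complex \<Rightarrow> complex \<Rightarrow> complex" where
  "amm q X0 X1 Q = (2*q*Q^3 - (q+q^2)*Q^4 + (-2*Q^2+(1+q)*Q^3)*(X0+X1) + (2*Q/q - 2*(1+q)*Q^2/q + 2*Q^3)*X0*X1
      + ((1+q)*Q/q^2 - 2*Q^2/q)*X0*X1*(X0+X1) + (-(1+q)/q^3 + 2*Q/q^2)*X0^2*X1^2)/Q^2"

lemma scal_mm:
  fixes q t T X0 X1 :: complex
  assumes nz: "q \<noteq> 0" "t \<noteq> 0" "T \<noteq> 0" "X0 \<noteq> 0" "X1 \<noteq> 0" "1 - q*t \<noteq> 0" "X0 - q^2*t \<noteq> 0" "X1 - q^2*t \<noteq> 0"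
  shows "(X0*X1 - q^2*t)^2/(q^3*t^2)
     + q*(1 - t/T)*(1 - q^3*T/(X0*X1)*t)*X0*X1*amm q X0 X1 (q*t)/((1-q*t)^2*(X0-q^2*t)*(X1-q^2*t))
     + (1 - t/T)*(1 - q*t/T)*(1 - q^3*T/(X0*X1)*t)*(1 - q^3*T/(X0*X1)*(q*t))*(X0*X1)^2/((1-q*t)^2*q^4*t^2)
     = (X0*X1 - q^2*T)^2*(1-q*T)^2/(q^3*T^2*(1-q*t)^2)"
  unfolding amm_def using nz by (simp add: divide_simps) algebra

lemma scal_mm0:
  fixes q T X0 X1 :: complex
  assumes nz: "q \<noteq> 0" "T \<noteq> 0" "X0 \<noteq> 0" "X1 \<noteq> 0" "1 - q \<noteq> 0" "X0 - q^2 \<noteq> 0" "X1 - q^2 \<noteq> 0"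
  shows "amm q X0 X1 1 + q*(1 - 1/T)*(1 - q^3*T/(X0*X1))/((1-q)^2*(1-q^2/X0)*(1-q^2/X1))
          * ((1-q)^2*(X0-q)*(X0-q*q)*(X1-q)*(X1-q*q)/(q^2*q^2))
       = -((X0*X1-q^2*T)*(1-q*T)*(X0-q)*(X1-q))/(T*q^3)"
proof -
  have a: "1-q^2/X0 \<noteq> 0" "1-q^2/X1 \<noteq> 0" using nz by (simp_all add: field_simps)
  show ?thesis unfolding amm_def using nz a by (simp add: divide_simps) algebra
qed


lemma comb2: fixes P a r1 b K pr S :: complex
  assumes "a + r1*b = S" "K*pr = S" shows "P*(a + r1*b) = K*(P*pr)"
proof -
  have "P*(a + r1*b) = P*(K*pr)" using assms by simp
  also have "\<dots> = K*(P*pr)" by (simp add: mult_ac)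
  finally show ?thesis .
qed
lemma comb3: fixes P c g r1 a r2 b K pr cx S :: complex
  assumes "g + r1*a + r1*r2*b = S" "K*pr*cx = S"
  shows "P*(c*g + (c*r1)*a + (c*r1*r2)*b) = K*(P*pr*(c*cx))"
proof -
  have "c*g + (c*r1)*a + (c*r1*r2)*b = c*(g + r1*a + r1*r2*b)" by (simp add: algebra_simps)
  also have "\<dots> = c*(K*pr*cx)" using assms by simp
  finally have "P*(c*g + (c*r1)*a + (c*r1*r2)*b) = P*(c*(K*pr*cx))" by simp
  also have "\<dots> = K*(P*pr*(c*cx))" by (simp add: mult_ac)
  finally show ?thesis .
qed
lemma frac_e: fixes a b c D s X0 X1 :: complex
  assumes "X0 \<noteq> 0" "X1 \<noteq> 0" shows "a*(b/X0)*(c/X1)/(s*(D/(X0*X1))) = a*b*c/(s*D)"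
  using assms by (cases "D = 0"; cases "s = 0") (simp_all add: field_simps)

lemma prodcanc:
  fixes A B C D E F q t a c w1 w2 X0 X1 :: complex
  assumes "A \<noteq> 0" "B \<noteq> 0" "C \<noteq> 0" "D \<noteq> 0" "E \<noteq> 0" "F \<noteq> 0" "q \<noteq> 0" "t \<noteq> 0"
  shows "(q*a*w1*X0*X1/(E^2*A*B)) * (q*c*w2*X0*X1/(F^2*C*D)) * (F^2*A*C*B*D/(q^2*(q*(q*t))^2))
    = a*c*w1*w2*(X0*X1)^2/(E^2*q^4*t^2)"
  using assms by (simp add: divide_simps) algebra

lemma tw_mm:
  fixes r x0 x1 :: complex
  assumes q: "0 < norm (r^4)" "norm (r^4) < 1"
    and gY: "AW_generic r n (x0/r^2) (x1/r^2)" and gX: "AW_generic r (n+1) x0 x1"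
    and n1: "n \<ge> 1" and j: "j \<le> n + 1"
  shows "pre r n (x0/r^2) (x1/r^2) * ((if j = 0 then 0 else cf r n (x0/r^2) (x1/r^2) (j - 1) * gamma_mm r (x0^2) (x1^2) ((r^4)^(j-1)))
            + cf r n (x0/r^2) (x1/r^2) j * alpha_mm r (x0^2) (x1^2) ((r^4)^j)
            + cf r n (x0/r^2) (x1/r^2) (Suc j) * beta_mm r (x0^2) (x1^2) ((r^4)^(Suc j)))
       = inverse (r ^ (4 * n + 10)) * (x0^2 * x1^2 - r ^ (4 * (n + 2)))^2 * (pre r (n + 1) x0 x1 * cf r (n + 1) x0 x1 j)"
proof -
  define q where "q = r^4"
  define s where "s = r^2"
  have r: "r \<noteq> 0" using q by auto
  have q0: "q \<noteq> 0" and s0: "s \<noteq> 0" using r by (simp_all add: q_def s_def)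
  have qs: "s*s = q" unfolding q_def s_def by (simp add: eval_nat_numeral)
  have x0: "x0 \<noteq> 0" and x1: "x1 \<noteq> 0" using gX by (auto simp: AW_generic_def Let_def)
  define X0 where "X0 = x0^2"
  define X1 where "X1 = x1^2"
  have X0: "X0 \<noteq> 0" and X1: "X1 \<noteq> 0" using x0 x1 by (simp_all add: X0_def X1_def)
  define T where "T = q^n"
  define R where "R = r^(2*n)"
  have T0: "T \<noteq> 0" using q0 by (simp add: T_def)
  define a0 where "a0 = q/(x0/r^2)^2"
  define a1 where "a1 = q/(x1/r^2)^2"
  define b0 where "b0 = q/x0^2"
  define b1 where "b1 = q/x1^2"
  define wY where "wY = q^(n+1)/((x0/r^2)^2*(x1/r^2)^2)"
  define wX where "wX = q^(n+1+1)/(x0^2*x1^2)"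
  define v where "v = inverse (q^n)"
  define vX where "vX = inverse (q^(n+1))"
  have b0q: "b0*q = a0" unfolding a0_def b0_def q_def using r by (simp add: field_simps eval_nat_numeral)
  have b1q: "b1*q = a1" unfolding a1_def b1_def q_def using r by (simp add: field_simps eval_nat_numeral)
  have wXq: "wX*q = wY" unfolding wY_def wX_def q_def using r by (simp add: field_simps eval_nat_numeral)
  have vXq: "vX*q = v" unfolding v_def vX_def using q0 by (simp add: field_simps)
  have a0e: "a0 = q^2/X0" unfolding a0_def X0_def q_def using r by (simp add: field_simps eval_nat_numeral)
  have a1e: "a1 = q^2/X1" unfolding a1_def X1_def q_def using r by (simp add: field_simps eval_nat_numeral)
  have b0e: "b0 = q/X0" unfolding b0_def X0_def ..
  have b1e: "b1 = q/X1" unfolding b1_def X1_def ..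
  have wYe: "wY = q^3*T/(X0*X1)" unfolding wY_def X0_def X1_def T_def q_def using r by (simp add: field_simps eval_nat_numeral)
  have wXe: "wX = q^2*T/(X0*X1)" unfolding wX_def X0_def X1_def T_def by (simp add: field_simps eval_nat_numeral)
  have ve: "v = 1/T" unfolding v_def T_def by (simp add: field_simps)
  have vXe: "vX = 1/(q*T)" unfolding vX_def T_def by (simp add: field_simps)
  define rhoY where "rhoY k = q*(1 - v*k)*(1 - wY*k)/((1-q*k)*(1-q*k)*(1-a0*k)*(1-a1*k))" for k
  have cfS: "cf r n (x0/r^2) (x1/r^2) (Suc k) = cf r n (x0/r^2) (x1/r^2) k * rhoY (q^k)" for k
    unfolding cf_Suc rhoY_def q_def[symmetric] a0_def[symmetric] a1_def[symmetric] wY_def[symmetric]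
      v_def[symmetric] ..
  define Qn where "Qn = qpoch q q n"
  have PR: "pre r (n+1) x0 x1 = pre r n (x0/r^2) (x1/r^2) * ((q*T-1)*(1-b0)*(1-b1)/(s*(1-wX)))"
  proof -
    have e1: "qpoch q q (Suc n) = Qn*(1-q*T)" unfolding qp_Suc Qn_def T_def by simp
    have e2: "qpoch q b0 (Suc n) = (1-b0)*qpoch q a0 n" unfolding qp_Suc' b0q ..
    have e3: "qpoch q b1 (Suc n) = (1-b1)*qpoch q a1 n" unfolding qp_Suc' b1q ..
    have e4: "qpoch q wX (Suc n) = (1-wX)*qpoch q wY n" unfolding qp_Suc' wXq ..
    have e5: "inverse (r^(2*(n+1))) = inverse R * inverse s" unfolding R_def s_def
      by (simp add: power_add inverse_mult_distrib power2_eq_square)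
    show ?thesis
      unfolding pre_def q_def[symmetric] b0_def[symmetric] b1_def[symmetric] wX_def[symmetric]
        a0_def[symmetric] a1_def[symmetric] wY_def[symmetric] e5
      unfolding Suc_eq_plus1[symmetric]
      unfolding e1 e2 e3 e4 R_def[symmetric] Qn_def[symmetric]
      by (simp add: divide_inverse inverse_mult_distrib mult_ac) (simp add: algebra_simps)
  qed
  have CX: "cf r (n+1) x0 x1 (Suc i) = cf r n (x0/r^2) (x1/r^2) i * (q*(1-vX)*(1-wX)/((1-q*q^i)^2*(1-b0)*(1-b1)))" for i
  proof -
    have e1: "qpoch q q (Suc i) = qpoch q q i*(1-q*q^i)" unfolding qp_Suc by simp
    have e2: "qpoch q b0 (Suc i) = (1-b0)*qpoch q a0 i" unfolding qp_Suc' b0q ..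
    have e3: "qpoch q b1 (Suc i) = (1-b1)*qpoch q a1 i" unfolding qp_Suc' b1q ..
    have e4: "qpoch q wX (Suc i) = (1-wX)*qpoch q wY i" unfolding qp_Suc' wXq ..
    have e6: "qpoch q vX (Suc i) = (1-vX)*qpoch q v i" unfolding qp_Suc' vXq ..
    show ?thesis
      unfolding cf_def q_def[symmetric] b0_def[symmetric] b1_def[symmetric] wX_def[symmetric]
        a0_def[symmetric] a1_def[symmetric] wY_def[symmetric] v_def[symmetric] vX_def[symmetric]
      unfolding e1 e2 e3 e4 e6
      by (simp add: divide_inverse inverse_mult_distrib mult_ac power2_eq_square)
  qed
  have al: "alpha_mm r (x0^2) (x1^2) Q = amm q X0 X1 Q" for Q
    unfolding alpha_mm_def amm_def Let_def q_def X0_def X1_def ..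
  have ga: "gamma_mm r (x0^2) (x1^2) Q = (X0*X1 - q^2*Q)^2/(q^3*Q^2)" for Q
    unfolding gamma_mm_def q_def X0_def X1_def by (simp add: power_mult[symmetric])
  have bm: "beta_mm r (x0^2) (x1^2) Q = (1-Q)^2*(X0-Q)*(X0-q*Q)*(X1-Q)*(X1-q*Q)/(q^2*Q^2)" for Q
    unfolding beta_mm_def q_def X0_def X1_def by (simp add: power_mult[symmetric])
  have K: "inverse (r ^ (4 * n + 10)) * (x0^2 * x1^2 - r ^ (4 * (n + 2)))^2 = (X0*X1 - q^2*T)^2/(T*q^2*s)"
  proof -
    have p1: "r^(4*n+10) = (r^4)^n*(r^4)^2*r^2" by (simp add: power_add power_mult[symmetric] mult.commute)
    have p2: "r^(4*(n+2)) = (r^4)^2*(r^4)^n" by (simp add: power_add power_mult[symmetric] mult.commute)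
    show ?thesis unfolding p1 p2 X0_def X1_def T_def q_def s_def by (simp add: divide_inverse mult_ac)
  qed
  have gX': "qpoch q b0 (n+1) \<noteq> 0" "qpoch q b1 (n+1) \<noteq> 0" "qpoch q wX (n+1) \<noteq> 0"
    using gX unfolding AW_generic_def Let_def b0_def b1_def wX_def q_def by auto
  have gY': "qpoch q a0 n \<noteq> 0" "qpoch q a1 n \<noteq> 0"
    using gY unfolding AW_generic_def Let_def a0_def a1_def q_def by auto
  have nb: "1 - b0 \<noteq> 0" "1 - b1 \<noteq> 0" "1 - wX \<noteq> 0"
    using qp_nz_factor[OF gX'(1), of 0] qp_nz_factor[OF gX'(2), of 0] qp_nz_factor[OF gX'(3), of 0] by auto
  have nq: "1 - q*q^i \<noteq> 0" for i using qpow_ne1[of q "Suc i"] q unfolding q_def by auto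
  have nqT: "1 - q*T \<noteq> 0" using nq[of n] by (simp add: T_def)
  have nW: "X0*X1 - q^2*T \<noteq> 0" using nb(3) X0 X1 unfolding wXe by (simp add: field_simps)
  show ?thesis
  proof (cases j)
    case 0
    have c0: "cf r n (x0/r^2) (x1/r^2) 0 = 1" "cf r (n+1) x0 x1 0 = 1" by (simp_all add: cf_def)
    have c1: "cf r n (x0/r^2) (x1/r^2) (Suc 0) = rhoY 1" using cfS[of 0] c0 by simp
    have rho1: "rhoY 1 = q*(1 - 1/T)*(1 - q^3*T/(X0*X1))/((1-q)^2*(1-q^2/X0)*(1-q^2/X1))"
      unfolding rhoY_def ve wYe a0e a1e by (simp add: power2_eq_square)
    have na: "X0 - q^2 \<noteq> 0" "X1 - q^2 \<noteq> 0"
    proof -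
      have "1 - a0 \<noteq> 0" "1 - a1 \<noteq> 0" using qp_nz_factor[OF gY'(1), of 0] qp_nz_factor[OF gY'(2), of 0] n1 by auto
      then show "X0 - q^2 \<noteq> 0" "X1 - q^2 \<noteq> 0" unfolding a0e a1e using X0 X1 by (auto simp: field_simps)
    qed
    have n1q: "1 - q \<noteq> 0" using nq[of 0] by simp
    have S: "amm q X0 X1 1 + rhoY 1 * ((1-q)^2*(X0-q)*(X0-q*q)*(X1-q)*(X1-q*q)/(q^2*q^2))
       = -((X0*X1-q^2*T)*(1-q*T)*(X0-q)*(X1-q))/(T*q^3)"
      unfolding rho1 by (rule scal_mm0[OF q0 T0 X0 X1 n1q na])
    have S2: "(X0*X1 - q^2*T)^2/(T*q^2*s) * ((q*T-1)*(1-b0)*(1-b1)/(s*(1-wX)))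
       = -((X0*X1-q^2*T)*(1-q*T)*(X0-q)*(X1-q))/(T*q^3)"
    proof -
      have nb': "X0 - q \<noteq> 0 \<or> True" by simp
      have w1: "1 - wX = (X0*X1 - q^2*T)/(X0*X1)" unfolding wXe using X0 X1 by (simp add: field_simps)
      have b0': "1 - b0 = (X0-q)/X0" unfolding b0e using X0 by (simp add: field_simps)
      have b1': "1 - b1 = (X1-q)/X1" unfolding b1e using X1 by (simp add: field_simps)
      have e: "(q*T-1)*(1-b0)*(1-b1)/(s*(1-wX)) = (q*T-1)*(X0-q)*(X1-q)/(s*(X0*X1-q^2*T))"
        unfolding w1 b0' b1' by (rule frac_e[OF X0 X1])
      show ?thesis unfolding e using nW X0 X1 T0 q0 s0 unfolding qs[symmetric]
        by (simp add: divide_simps) algebra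
    qed
    have p: "(r^4)^0 = 1" "(r^4)^(Suc 0) = q" by (simp_all add: q_def)
    show ?thesis unfolding 0 c0 c1 PR K al bm p using comb2[OF S S2, of "pre r n (x0/r^2) (x1/r^2)"]
      by simp
  next
    case (Suc i)
    have i: "i \<le> n" using j Suc by simp
    define t where "t = q^i"
    have t0: "t \<noteq> 0" using q0 by (simp add: t_def)
    have nqt: "1 - q*t \<noteq> 0" using nq[of i] by (simp add: t_def)
    have pw: "(r^4)^i = t" "(r^4)^(Suc i) = q*t" "(r^4)^(Suc (Suc i)) = q*(q*t)" by (simp_all add: q_def t_def)
    have c1: "cf r n (x0/r^2) (x1/r^2) (Suc i) = cf r n (x0/r^2) (x1/r^2) i * rhoY t"
      using cfS[of i] by (simp add: t_def)
    have c2: "cf r n (x0/r^2) (x1/r^2) (Suc (Suc i)) = cf r n (x0/r^2) (x1/r^2) i * rhoY t * rhoY (q*t)"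
      using cfS[of "Suc i"] c1 by (simp add: t_def)
    have RS: "(X0*X1 - q^2*T)^2/(T*q^2*s) * ((q*T-1)*(1-b0)*(1-b1)/(s*(1-wX)))
        * (q*(1-vX)*(1-wX)/((1-q*t)^2*(1-b0)*(1-b1)))
      = (X0*X1 - q^2*T)^2*(1-q*T)^2/(q^3*T^2*(1-q*t)^2)"
      unfolding vXe using nb nqt T0 q0 s0 unfolding qs[symmetric] by (simp add: divide_simps) algebra
    have SC: "(X0*X1 - q^2*t)^2/(q^3*t^2) + rhoY t * amm q X0 X1 (q*t)
        + rhoY t * rhoY (q*t) * ((1-q*(q*t))^2*(X0-q*(q*t))*(X0-q*(q*(q*t)))*(X1-q*(q*t))*(X1-q*(q*(q*t)))/(q^2*(q*(q*t))^2))
      = (X0*X1 - q^2*T)^2*(1-q*T)^2/(q^3*T^2*(1-q*t)^2)"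
    proof (cases "i < n")
      case False
      then have tT: "t = T" using i by (simp add: t_def T_def)
      have "rhoY t = 0" unfolding rhoY_def ve tT using T0 by simp
      then show ?thesis unfolding tT using nqT T0 q0 by (simp add: divide_simps)
    next
      case True
      have na: "X0 - q^2*t \<noteq> 0" "X1 - q^2*t \<noteq> 0"
      proof -
        have "1 - a0*t \<noteq> 0" "1 - a1*t \<noteq> 0"
          using qp_nz_factor[OF gY'(1) True] qp_nz_factor[OF gY'(2) True] by (simp_all add: t_def)
        then show "X0 - q^2*t \<noteq> 0" "X1 - q^2*t \<noteq> 0" unfolding a0e a1e using X0 X1 by (auto simp: field_simps)
      qed
      have R1: "rhoY t * amm q X0 X1 (q*t) = q*(1 - t/T)*(1 - q^3*T/(X0*X1)*t)*X0*X1*amm q X0 X1 (q*t)/((1-q*t)^2*(X0-q^2*t)*(X1-q^2*t))"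
        unfolding rhoY_def ve wYe a0e a1e using na X0 X1 T0 nqt by (simp add: divide_simps) algebra
      have R2: "rhoY t * rhoY (q*t) * ((1-q*(q*t))^2*(X0-q*(q*t))*(X0-q*(q*(q*t)))*(X1-q*(q*t))*(X1-q*(q*(q*t)))/(q^2*(q*(q*t))^2))
        = (1 - t/T)*(1 - q*t/T)*(1 - q^3*T/(X0*X1)*t)*(1 - q^3*T/(X0*X1)*(q*t))*(X0*X1)^2/((1-q*t)^2*q^4*t^2)"
      proof (cases "Suc i < n")
        case True
        have nb2: "X0 - q^2*(q*t) \<noteq> 0" "X1 - q^2*(q*t) \<noteq> 0"
        proof -
          have "1 - a0*(q*t) \<noteq> 0" "1 - a1*(q*t) \<noteq> 0"
            using qp_nz_factor[OF gY'(1) True] qp_nz_factor[OF gY'(2) True] by (simp_all add: t_def)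
          then show "X0 - q^2*(q*t) \<noteq> 0" "X1 - q^2*(q*t) \<noteq> 0" unfolding a0e a1e using X0 X1 by (auto simp: field_simps)
        qed
        have nqqt: "1 - q*(q*t) \<noteq> 0" using nq[of "Suc i"] by (simp add: t_def)
        have rt: "rhoY t = q*(1 - t/T)*(1 - q^3*T/(X0*X1)*t)*X0*X1/((1-q*t)^2*(X0-q^2*t)*(X1-q^2*t))"
          unfolding rhoY_def ve wYe a0e a1e using na X0 X1 T0 nqt by (simp add: divide_simps) algebra
        have rqt: "rhoY (q*t) = q*(1 - q*t/T)*(1 - q^3*T/(X0*X1)*(q*t))*X0*X1/((1-q*(q*t))^2*(X0-q^2*(q*t))*(X1-q^2*(q*t)))"
          unfolding rhoY_def ve wYe a0e a1e using nb2 X0 X1 T0 nqqt by (simp add: divide_simps) algebra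
        have f: "X0 - q*(q*t) = X0 - q^2*t" "X1 - q*(q*t) = X1 - q^2*t"
          "X0 - q*(q*(q*t)) = X0 - q^2*(q*t)" "X1 - q*(q*(q*t)) = X1 - q^2*(q*t)"
          by (simp_all add: power2_eq_square mult.assoc)
        show ?thesis unfolding rt rqt f
          by (rule prodcanc[OF na nb2 nqt nqqt q0 t0])
      next
        case False
        then have "n = Suc i" using True by simp
        then have tT: "T = q*t" by (simp add: t_def T_def)
        have "rhoY (q*t) = 0" unfolding rhoY_def ve tT using T0 tT by simp
        moreover have "1 - q*t/T = 0" using T0 tT by simp
        ultimately show ?thesis by simp
      qed
      show ?thesis unfolding R1 R2 by (rule scal_mm[OF q0 t0 T0 X0 X1 nqt na])
    qed
    have ifs: "(if Suc i = 0 then 0 else X) = X" for X :: complex by simp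
    have CX': "cf r (n+1) x0 x1 (Suc i) = cf r n (x0/r^2) (x1/r^2) i * (q*(1-vX)*(1-wX)/((1-q*t)^2*(1-b0)*(1-b1)))"
      unfolding CX t_def ..
    show ?thesis unfolding Suc ifs diff_Suc_1 unfolding pw unfolding c1 c2 CX' PR K unfolding al bm ga
      by (rule comb3[OF SC RS])
  qed
qed

lemma cf_vanish_gt: assumes "r \<noteq> 0" "n < k" shows "cf r n y0 y1 k = 0"
proof -
  have "qpoch (r^4) (inverse ((r^4)^n)) k = 0"
    unfolding qpoch_def using assms by (intro prod_zero) (auto intro!: bexI[of _ n])
  then show ?thesis unfolding cf_def by simp
qed

lemma case_mm:
  fixes r x x0 x1 :: complex
  assumes q: "0 < norm (r^4)" "norm (r^4) < 1"
    and x: "x \<noteq> 0" "x^2 \<noteq> 1" "r^2*x \<noteq> 1" "r^2 \<noteq> x"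
    and gY: "AW_generic r n (x0/r^2) (x1/r^2)" and gX: "AW_generic r (n+1) x0 x1" and n1: "n \<ge> 1"
  shows "d_mm r x0 x1 (\<lambda>y. AWP r n y (x0/r^2) (x1/r^2)) x
        = inverse (r ^ (4 * n + 10)) * (x0^2 * x1^2 - r ^ (4 * (n + 2)))^2 * AWP r (n + 1) x x0 x1"
proof -
  have r: "r \<noteq> 0" using q by auto
  let ?P = "pre r n (x0/r^2) (x1/r^2)"
  let ?c = "cf r n (x0/r^2) (x1/r^2)"
  let ?K = "inverse (r ^ (4 * n + 10)) * (x0^2 * x1^2 - r ^ (4 * (n + 2)))^2"
  let ?g = "\<lambda>k. gamma_mm r (x0^2) (x1^2) ((r^4)^k)"
  let ?a = "\<lambda>k. alpha_mm r (x0^2) (x1^2) ((r^4)^k)"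
  let ?b = "\<lambda>k. beta_mm r (x0^2) (x1^2) ((r^4)^k)"
  let ?co = "\<lambda>j. (if j = 0 then 0 else ?c (j - 1) * ?g (j - 1)) + ?c j * ?a j + ?c (Suc j) * ?b (Suc j)"
  have b0: "?b 0 = 0" by (simp add: beta_mm_def)
  have cz: "?c k = 0" if "n < k" for k using cf_vanish_gt[OF r that] .
  have "d_mm r x0 x1 (\<lambda>y. AWP r n y (x0/r^2) (x1/r^2)) x
      = d_mm r x0 x1 (\<lambda>y. ?P * (\<Sum>k = 0..n. ?c k * phi r k y)) x"
    unfolding AWP_eq ..
  also have "\<dots> = ?P * (\<Sum>k = 0..n. ?c k * (?g k * phi r (Suc k) x + ?a k * phi r k x + ?b k * phi r (k - 1) x))"
    unfolding dmm_const dmm_sum[OF finite_atLeastAtMost] dmm_phi[OF r x] ..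
  also have "\<dots> = ?P * ((\<Sum>k = 0..n. ?c k * ?g k * phi r (Suc k) x) + (\<Sum>k = 0..n. ?c k * ?a k * phi r k x)
       + (\<Sum>k = 0..n. ?c k * ?b k * phi r (k - 1) x))"
    by (simp add: sum.distrib algebra_simps)
  also have "(\<Sum>k = 0..n. ?c k * ?g k * phi r (Suc k) x) = (\<Sum>j = 0..Suc n. (if j = 0 then 0 else ?c (j - 1) * ?g (j - 1)) * phi r j x)"
    by (simp add: sum.atLeast0_atMost_Suc_shift del: sum.cl_ivl_Suc)
  also have "(\<Sum>k = 0..n. ?c k * ?a k * phi r k x) = (\<Sum>j = 0..Suc n. ?c j * ?a j * phi r j x)"
    using cz[of "Suc n"] by simp
  also have "(\<Sum>k = 0..n. ?c k * ?b k * phi r (k - 1) x) = (\<Sum>k = 0..Suc (Suc n). ?c k * ?b k * phi r (k - 1) x)"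
    using cz[of "Suc n"] cz[of "Suc (Suc n)"] by simp
  also have "\<dots> = (\<Sum>j = 0..Suc n. ?c (Suc j) * ?b (Suc j) * phi r j x)"
    using b0 by (simp add: sum.atLeast0_atMost_Suc_shift del: sum.cl_ivl_Suc)
  also have "?P * ((\<Sum>j = 0..Suc n. (if j = 0 then 0 else ?c (j - 1) * ?g (j - 1)) * phi r j x)
      + (\<Sum>j = 0..Suc n. ?c j * ?a j * phi r j x) + (\<Sum>j = 0..Suc n. ?c (Suc j) * ?b (Suc j) * phi r j x))
      = (\<Sum>j = 0..Suc n. (?P * ?co j) * phi r j x)"
    by (simp add: sum.distrib[symmetric] sum_distrib_left algebra_simps)
  also have "\<dots> = (\<Sum>j = 0..Suc n. (?K * (pre r (n+1) x0 x1 * cf r (n+1) x0 x1 j)) * phi r j x)"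
  proof (rule sum.cong[OF refl])
    fix j assume "j \<in> {0..Suc n}"
    then have jn: "j \<le> n + 1" by simp
    show "(?P * ?co j) * phi r j x = (?K * (pre r (n+1) x0 x1 * cf r (n+1) x0 x1 j)) * phi r j x"
      unfolding tw_mm[OF q gY gX n1 jn] ..
  qed
  also have "\<dots> = ?K * AWP r (n + 1) x x0 x1"
    unfolding AWP_eq by (simp add: sum_distrib_left mult.assoc del: sum.cl_ivl_Suc)
  finally show ?thesis .
qed

lemma AWP_sym: "AWP r n x y0 y1 = AWP r n x y1 y0"
  unfolding AWP_def Let_def by (simp add: ac_simps)

lemma AW_generic_sym: "AW_generic r n y0 y1 = AW_generic r n y1 y0"
  unfolding AW_generic_def Let_def by (auto simp: ac_simps)

lemma dmp_eq: "d_mp r x0 f x = d_pm r x0 f x"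
  unfolding d_mp_def d_pm_def ..

theorem mainTheorem8:
  fixes r x x0 x1 :: complex and n :: nat
  assumes q: "0 < norm (r ^ 4)" "norm (r ^ 4) < 1"
    and n: "n \<ge> 1"
    and x: "x \<noteq> 0" "x\<^sup>2 \<noteq> 1" "r ^ 2 * x \<noteq> 1" "r ^ 2 * inverse x \<noteq> 1"
  shows
   "(AW_generic r n (r ^ 2 * x0) (r ^ 2 * x1) \<and> AW_generic r (n - 1) x0 x1 \<longrightarrow>
      d_pp r (\<lambda>y. AWP r n y (r ^ 2 * x0) (r ^ 2 * x1)) x
        = inverse (r ^ (4 * n + 2)) * (1 - r ^ (4 * n))\<^sup>2 * AWP r (n - 1) x x0 x1)
  \<and> (AW_generic r n (r ^ 2 * x0) (x1 / r ^ 2) \<and> AW_generic r n x0 x1 \<longrightarrow>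
      d_pm r x1 (\<lambda>y. AWP r n y (r ^ 2 * x0) (x1 / r ^ 2)) x
        = inverse (r ^ (4 * n + 6)) * (x1\<^sup>2 - r ^ (4 * (n + 1)))\<^sup>2 * AWP r n x x0 x1)
  \<and> (AW_generic r n (x0 / r ^ 2) (r ^ 2 * x1) \<and> AW_generic r n x0 x1 \<longrightarrow>
      d_mp r x0 (\<lambda>y. AWP r n y (x0 / r ^ 2) (r ^ 2 * x1)) x
        = inverse (r ^ (4 * n + 6)) * (x0\<^sup>2 - r ^ (4 * (n + 1)))\<^sup>2 * AWP r n x x0 x1)
  \<and> (AW_generic r n (x0 / r ^ 2) (x1 / r ^ 2) \<and> AW_generic r (n + 1) x0 x1 \<longrightarrow>
      d_mm r x0 x1 (\<lambda>y. AWP r n y (x0 / r ^ 2) (x1 / r ^ 2)) x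
        = inverse (r ^ (4 * n + 10)) * (x0\<^sup>2 * x1\<^sup>2 - r ^ (4 * (n + 2)))\<^sup>2
            * AWP r (n + 1) x x0 x1)"
proof -
  have x': "x \<noteq> 0" "x^2 \<noteq> 1" "r^2*x \<noteq> 1" "r^2 \<noteq> x"
  proof -
    show "x \<noteq> 0" "x^2 \<noteq> 1" "r^2*x \<noteq> 1" using x by auto
    show "r^2 \<noteq> x"
    proof
      assume "r^2 = x"
      then have "r^2 * inverse x = 1" using x(1) by simp
      then show False using x(4) by simp
    qed
  qed
  obtain m where m: "n = Suc m" using n by (cases n) auto
  show ?thesis
  proof (intro conjI impI)
    assume "AW_generic r n (r ^ 2 * x0) (r ^ 2 * x1) \<and> AW_generic r (n - 1) x0 x1"
    then show "d_pp r (\<lambda>y. AWP r n y (r ^ 2 * x0) (r ^ 2 * x1)) x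
        = inverse (r ^ (4 * n + 2)) * (1 - r ^ (4 * n))\<^sup>2 * AWP r (n - 1) x x0 x1"
      unfolding m using case_pp[OF q x'] by simp
  next
    assume "AW_generic r n (r ^ 2 * x0) (x1 / r ^ 2) \<and> AW_generic r n x0 x1"
    then show "d_pm r x1 (\<lambda>y. AWP r n y (r ^ 2 * x0) (x1 / r ^ 2)) x
        = inverse (r ^ (4 * n + 6)) * (x1\<^sup>2 - r ^ (4 * (n + 1)))\<^sup>2 * AWP r n x x0 x1"
      using case_pm[OF q x'] n by blast
  next
    assume a: "AW_generic r n (x0 / r ^ 2) (r ^ 2 * x1) \<and> AW_generic r n x0 x1"
    have gY: "AW_generic r n (r ^ 2 * x1) (x0 / r ^ 2)" and gX: "AW_generic r n x1 x0"
      using a AW_generic_sym by blast+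
    have "d_pm r x0 (\<lambda>y. AWP r n y (r ^ 2 * x1) (x0 / r ^ 2)) x
        = inverse (r ^ (4 * n + 6)) * (x0\<^sup>2 - r ^ (4 * (n + 1)))\<^sup>2 * AWP r n x x1 x0"
      by (rule case_pm[OF q x' gY gX n])
    then show "d_mp r x0 (\<lambda>y. AWP r n y (x0 / r ^ 2) (r ^ 2 * x1)) x
        = inverse (r ^ (4 * n + 6)) * (x0\<^sup>2 - r ^ (4 * (n + 1)))\<^sup>2 * AWP r n x x0 x1"
      unfolding dmp_eq by (simp add: AWP_sym[of r n _ "x0 / r ^ 2"] AWP_sym[of r n x x1 x0])
  next
    assume "AW_generic r n (x0 / r ^ 2) (x1 / r ^ 2) \<and> AW_generic r (n + 1) x0 x1"
    then show "d_mm r x0 x1 (\<lambda>y. AWP r n y (x0 / r ^ 2) (x1 / r ^ 2)) x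
        = inverse (r ^ (4 * n + 10)) * (x0\<^sup>2 * x1\<^sup>2 - r ^ (4 * (n + 2)))\<^sup>2
            * AWP r (n + 1) x x0 x1"
      using case_mm[OF q x'] n by blast
  qed
qed

end
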